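(* Let $k, n$ be integers with $2 \le k \le n$ and let $\xi$ be a transcendental real number. Then $$\lambda_n (\xi) \ge \frac{w_k^{\rm lead} (\xi) - n + k}{(k-1) w_k^{\rm lead} (\xi) + n}.$$ Furthermore, this inequality remains true with $w_k^{\rm lead}(\xi)$ replaced by $w_k(\xi)$ when $k=2$ or when $n = k+1$.
   Context: For an integer $n \ge 1$ and a real number $\xi$, $\lambda_n(\xi)$ denotes the supremum (possibly $+\infty$) of the real numbers $\lambda$ such that, for arbitrarily large real numbers $X$, the inequalities $0 < |x_0| \le X$, $\max_{1 \le m \le n} |x_0 \xi^m - x_m| \le X^{-\lambda}$ have a solution in integers $x_0, \ldots, x_n$. For an integer $k\ge1$, $w_k(\xi)$ denotes the supremum of the real numbers $w$ such that, for arbitrarily large real numbers $X$, the inequalities $0 < |x_k \xi^k + \cdots + x_1\xi + x_0| \le X^{-w}$, $\max_{0\le j\le k}|x_j| \le X$ have a solution in integers $x_0,\ldots,x_k$; $w_k^{\rm lead}(\xi)$ is defined in the same way but with the additional requirement that $|x_k| \ge |x_j|$ for all $0 \le j \le k-1$. When the relevant exponent $w$ is $+\infty$, the right-hand side $\frac{w-n+k}{(k-1)w+n}$ is interpreted as its limit $1/(k-1)$. *)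

theory Defs
  imports "HOL-Analysis.Analysis" "HOL-Computational_Algebra.Polynomial"
    "HOL-Library.Extended_Real"
begin

definition lambda_exp :: "nat \<Rightarrow> real \<Rightarrow> ereal" where
  "lambda_exp n \<xi> = Sup (ereal ` {lam. \<forall>X0. \<exists>X\<ge>X0. \<exists>x :: nat \<Rightarrow> int.
      0 < \<bar>x 0\<bar> \<and> \<bar>real_of_int (x 0)\<bar> \<le> X \<and>
      (\<forall>m\<in>{1..n}. \<bar>real_of_int (x 0) * \<xi> ^ m - real_of_int (x m)\<bar> \<le> X powr (- lam))})"

definition w_exp :: "nat \<Rightarrow> real \<Rightarrow> ereal" where
  "w_exp k \<xi> = Sup (ereal ` {w. \<forall>X0. \<exists>X\<ge>X0. \<exists>x :: nat \<Rightarrow> int.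
      0 < \<bar>\<Sum>j\<le>k. real_of_int (x j) * \<xi> ^ j\<bar> \<and>
      \<bar>\<Sum>j\<le>k. real_of_int (x j) * \<xi> ^ j\<bar> \<le> X powr (- w) \<and>
      (\<forall>j\<le>k. \<bar>real_of_int (x j)\<bar> \<le> X)})"

definition w_lead_exp :: "nat \<Rightarrow> real \<Rightarrow> ereal" where
  "w_lead_exp k \<xi> = Sup (ereal ` {w. \<forall>X0. \<exists>X\<ge>X0. \<exists>x :: nat \<Rightarrow> int.
      0 < \<bar>\<Sum>j\<le>k. real_of_int (x j) * \<xi> ^ j\<bar> \<and>
      \<bar>\<Sum>j\<le>k. real_of_int (x j) * \<xi> ^ j\<bar> \<le> X powr (- w) \<and>
      (\<forall>j\<le>k. \<bar>real_of_int (x j)\<bar> \<le> X) \<and>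
      (\<forall>j<k. \<bar>x j\<bar> \<le> \<bar>x k\<bar>)})"

definition bound_fun :: "nat \<Rightarrow> nat \<Rightarrow> ereal \<Rightarrow> ereal" where
  "bound_fun n k w = (case w of
      ereal r \<Rightarrow> ereal ((r - real n + real k) / ((real k - 1) * r + real n))
    | PInfty \<Rightarrow> ereal (1 / (real k - 1))
    | MInfty \<Rightarrow> -\<infinity>)"

end

theory Submission
  imports Defs
begin


definition Pv :: "(nat \<Rightarrow> int) \<Rightarrow> real \<Rightarrow> nat \<Rightarrow> real" where
  "Pv a \<xi> k = (\<Sum>i\<le>k. real_of_int (a i) * \<xi> ^ i)"

definition bco :: "(nat \<Rightarrow> int) \<Rightarrow> real \<Rightarrow> nat \<Rightarrow> nat \<Rightarrow> real" where
  "bco a \<xi> k r = (\<Sum>i\<in>{Suc r..k}. real_of_int (a i) * \<xi> ^ (i - Suc r))"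

lemma tel:
  fixes z :: "nat \<Rightarrow> real"
  shows "(\<Sum>r<i. \<xi> ^ (i - Suc r) * (\<xi> * z r - z (Suc r))) = \<xi> ^ i * z 0 - z i"
proof (induction i)
  case 0 then show ?case by simp
next
  case (Suc i)
  have "(\<Sum>r<Suc i. \<xi> ^ (Suc i - Suc r) * (\<xi> * z r - z (Suc r)))
      = (\<Sum>r<i. \<xi> * (\<xi> ^ (i - Suc r) * (\<xi> * z r - z (Suc r)))) + (\<xi> * z i - z (Suc i))"
    by (auto intro!: sum.cong simp: Suc_diff_Suc power_Suc[symmetric] mult.assoc)
  also have "\<dots> = \<xi> * (\<xi> ^ i * z 0 - z i) + (\<xi> * z i - z (Suc i))"
    by (simp add: sum_distrib_left[symmetric] Suc.IH)
  finally show ?case by (simp add: algebra_simps)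
qed

lemma key_identity:
  fixes z :: "nat \<Rightarrow> real"
  shows "(\<Sum>r<k. bco a \<xi> k r * (\<xi> * z (j + r) - z (j + Suc r)))
       = z j * Pv a \<xi> k - (\<Sum>i\<le>k. real_of_int (a i) * z (i + j))"
proof -
  have "(\<Sum>r<k. bco a \<xi> k r * (\<xi> * z (j + r) - z (j + Suc r)))
     = (\<Sum>r<k. \<Sum>i\<in>{Suc r..k}. real_of_int (a i) * (\<xi> ^ (i - Suc r) * (\<xi> * z (j + r) - z (j + Suc r))))"
    by (simp add: bco_def sum_distrib_right mult.assoc)
  also have "\<dots> = (\<Sum>i\<le>k. \<Sum>r<i. real_of_int (a i) * (\<xi> ^ (i - Suc r) * (\<xi> * z (j + r) - z (j + Suc r))))"
    by (rule sum.nested_swap'[symmetric])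
  also have "\<dots> = (\<Sum>i\<le>k. real_of_int (a i) * (\<xi> ^ i * z j - z (i + j)))"
  proof (rule sum.cong[OF refl])
    fix i
    have "(\<Sum>r<i. \<xi> ^ (i - Suc r) * (\<xi> * z (j + r) - z (j + Suc r))) = \<xi> ^ i * z (j+0) - z (j+i)"
      using tel[where \<xi>=\<xi> and z="\<lambda>r. z (j + r)" and i=i] by simp
    then show "(\<Sum>r<i. real_of_int (a i) * (\<xi> ^ (i - Suc r) * (\<xi> * z (j + r) - z (j + Suc r)))) =
         real_of_int (a i) * (\<xi> ^ i * z j - z (i + j))"
      by (simp add: sum_distrib_left[symmetric] add.commute)
  qed
  also have "\<dots> = z j * Pv a \<xi> k - (\<Sum>i\<le>k. real_of_int (a i) * z (i + j))"
    by (simp add: Pv_def algebra_simps sum_subtractf sum_distrib_left)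
  finally show ?thesis .
qed

lemma floor_box:
  fixes x e B :: real
  assumes "0 < e" "\<bar>x\<bar> \<le> B"
  shows "\<lfloor>x / e\<rfloor> \<in> {- \<lceil>B / e\<rceil> .. \<lceil>B / e\<rceil>}"
proof -
  have "- B \<le> x" "x \<le> B" using assms(2) by auto
  then have h1: "- (B / e) \<le> x / e" "x / e \<le> B / e" using assms(1)
    using divide_right_mono[of "-B" x e] divide_right_mono[of x B e] by auto
  have "real_of_int (- \<lceil>B / e\<rceil>) \<le> x / e" using h1(1) le_of_int_ceiling[of "B/e"] by linarith
  then have "- \<lceil>B / e\<rceil> \<le> \<lfloor>x / e\<rfloor>" by (simp only: le_floor_iff)
  moreover have "real_of_int \<lfloor>x / e\<rfloor> \<le> real_of_int \<lceil>B / e\<rceil>"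
    using h1(2) of_int_floor_le[of "x/e"] le_of_int_ceiling[of "B/e"] by linarith
  then have "\<lfloor>x / e\<rfloor> \<le> \<lceil>B / e\<rceil>" by (simp only: of_int_le_iff)
  ultimately show ?thesis by simp
qed

lemma floor_eq_close:
  fixes x y e :: real
  assumes "0 < e" "\<lfloor>x / e\<rfloor> = \<lfloor>y / e\<rfloor>"
  shows "\<bar>x - y\<bar> \<le> e"
proof -
  have "\<bar>x / e - y / e\<bar> < 1" using assms(2) floor_correct[of "x/e"] floor_correct[of "y/e"]
    by (simp add: abs_less_iff) linarith
  then have "\<bar>x - y\<bar> / e < 1" by (simp add: diff_divide_distrib[symmetric] abs_divide abs_of_pos[OF \<open>0 < e\<close>])
  then show ?thesis using assms(1) by (simp add: divide_less_eq)
qed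

lemma core:
  fixes \<xi> \<epsilon> H C :: real and a :: "nat \<Rightarrow> int" and F :: "nat set" and M n k :: nat
  assumes k1: "1 \<le> k" and kn: "k \<le> n" and e0: "0 < \<epsilon>" and e1: "\<epsilon> \<le> 1" and H1: "1 \<le> H"
    and aH: "\<forall>i\<le>k. \<bar>real_of_int (a i)\<bar> \<le> H"
    and FS: "F \<subseteq> {..<n}" and cF: "card F = k - 1"
    and solv: "\<forall>g e r. 0 \<le> e \<longrightarrow> 0 \<le> r \<longrightarrow> (\<forall>l\<in>F. \<bar>g l\<bar> \<le> e) \<longrightarrow>
        (\<forall>j<Suc n - k. \<bar>\<Sum>r<k. bco a \<xi> k r * g (j + r)\<bar> \<le> r) \<longrightarrow> (\<forall>l<n. \<bar>g l\<bar> \<le> C * (e + r / H))"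
    and big: "((2 * (1 + \<bar>\<xi>\<bar>) + 3) / \<epsilon>) ^ (k - 1) *
        (2 * (real M * (max 1 \<bar>\<xi>\<bar>) ^ n * \<bar>Pv a \<xi> k\<bar> + (real k + 1) * H) + 1) ^ (Suc n - k) < real M + 1"
  shows "\<exists>y::nat\<Rightarrow>int. 1 \<le> y 0 \<and> y 0 \<le> int M \<and> (\<forall>m\<in>{1..n}. \<bar>real_of_int (y 0) * \<xi> ^ m - real_of_int (y m)\<bar>
      \<le> real n * (max 1 \<bar>\<xi>\<bar>) ^ n * (C * (\<epsilon> + \<bar>Pv a \<xi> k\<bar> * (real M * (max 1 \<bar>\<xi>\<bar>) ^ n + 1) / H)))"
proof -
  define X where "X = max 1 \<bar>\<xi>\<bar>"
  define \<delta> where "\<delta> = \<bar>Pv a \<xi> k\<bar>"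
  define NN where "NN = Suc n - k"
  define u where "u = (\<lambda>m (t::int). \<lfloor>real_of_int t * \<xi> ^ m\<rfloor>)"
  define fr where "fr = (\<lambda>m (t::int). real_of_int t * \<xi> ^ m - real_of_int (u m t))"
  have fr01: "0 \<le> fr m t \<and> fr m t < 1" for m t
    unfolding fr_def u_def using floor_correct[of "real_of_int t * \<xi> ^ m"] by linarith
  have uf: "real_of_int (u m t) = real_of_int t * \<xi> ^ m - fr m t" for m t
    unfolding fr_def by simp
  define Gv where "Gv = (\<lambda>l t. \<xi> * real_of_int (u l t) - real_of_int (u (Suc l) t))"
  have Gvfr: "Gv l t = fr (Suc l) t - \<xi> * fr l t" for l t
    unfolding Gv_def uf by (simp add: algebra_simps)
  have Gvb: "\<bar>Gv l t\<bar> \<le> 1 + \<bar>\<xi>\<bar>" for l t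
  proof -
    have "\<bar>\<xi> * fr l t\<bar> \<le> \<bar>\<xi>\<bar>" using fr01[of l t] by (simp add: abs_mult mult_left_le)
    then show ?thesis unfolding Gvfr using fr01[of "Suc l" t] by linarith
  qed
  define psi where "psi = (\<lambda>j t. \<Sum>i\<le>k. a i * u (i + j) t)"
  define A where "A = \<lceil>(1 + \<bar>\<xi>\<bar>) / \<epsilon>\<rceil>"
  define Rr where "Rr = real M * X ^ n * \<delta> + (real k + 1) * H"
  define R where "R = \<lfloor>Rr\<rfloor>"
  have X1: "1 \<le> X" unfolding X_def by simp
  have psib: "\<bar>real_of_int (psi j t)\<bar> \<le> Rr" if "j < NN" "0 \<le> t" "t \<le> int M" for j t
  proof -
    have jn: "j \<le> n" using that kn k1 unfolding NN_def by linarith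
    have "real_of_int (psi j t) = (\<Sum>i\<le>k. real_of_int (a i) * (real_of_int t * \<xi> ^ (i + j) - fr (i + j) t))"
      unfolding psi_def by (simp add: uf)
    also have "\<dots> = real_of_int t * \<xi> ^ j * Pv a \<xi> k - (\<Sum>i\<le>k. real_of_int (a i) * fr (i + j) t)"
      by (simp add: Pv_def algebra_simps sum_subtractf sum_distrib_left power_add)
    finally have eq: "real_of_int (psi j t) = real_of_int t * \<xi> ^ j * Pv a \<xi> k - (\<Sum>i\<le>k. real_of_int (a i) * fr (i + j) t)" .
    have b1: "\<bar>real_of_int t * \<xi> ^ j * Pv a \<xi> k\<bar> \<le> real M * X ^ n * \<delta>"
    proof -
      have "\<bar>\<xi>\<bar> ^ j \<le> X ^ j" unfolding X_def by (simp add: power_mono)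
      also have "\<dots> \<le> X ^ n" using X1 jn by (simp add: power_increasing)
      finally have "\<bar>\<xi>\<bar> ^ j \<le> X ^ n" .
      moreover have "\<bar>real_of_int t\<bar> \<le> real M" using that by simp
      ultimately show ?thesis unfolding \<delta>_def abs_mult power_abs
        by (simp add: mult_mono mult_right_mono)
    qed
    have b2: "\<bar>\<Sum>i\<le>k. real_of_int (a i) * fr (i + j) t\<bar> \<le> (real k + 1) * H"
    proof -
      have "\<bar>\<Sum>i\<le>k. real_of_int (a i) * fr (i + j) t\<bar> \<le> (\<Sum>i\<le>k. \<bar>real_of_int (a i) * fr (i + j) t\<bar>)"
        by (rule sum_abs)
      also have "\<dots> \<le> (\<Sum>i\<le>k. H)"
      proof (rule sum_mono)
        fix i assume "i \<in> {..k}"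
        then have "\<bar>real_of_int (a i)\<bar> \<le> H" using aH by auto
        moreover have "\<bar>fr (i + j) t\<bar> \<le> 1" using fr01[of "i+j" t] by auto
        ultimately show "\<bar>real_of_int (a i) * fr (i + j) t\<bar> \<le> H" unfolding abs_mult
          using mult_mono[of "\<bar>real_of_int (a i)\<bar>" H "\<bar>fr (i + j) t\<bar>" 1] by auto
      qed
      finally show ?thesis by (simp add: add.commute)
    qed
    show ?thesis unfolding eq Rr_def using b1 b2 by linarith
  qed
  define box where "box = (\<lambda>t. (restrict (\<lambda>l. \<lfloor>Gv l t / \<epsilon>\<rfloor>) F, restrict (\<lambda>j. psi j t) {..<NN}))"
  define T where "T = (PiE F (\<lambda>_. {-A..A})) \<times> (PiE {..<NN} (\<lambda>_. {-R..R}))"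
  have finF: "finite F" using FS finite_subset by blast
  have finT: "finite T" unfolding T_def using finF by (simp add: finite_PiE)
  have boxT: "box ` {0..int M} \<subseteq> T"
  proof
    fix z assume "z \<in> box ` {0..int M}"
    then obtain t where t: "t \<in> {0..int M}" "z = box t" by auto
    have "\<lfloor>Gv l t / \<epsilon>\<rfloor> \<in> {-A..A}" for l
      unfolding A_def by (rule floor_box[OF e0 Gvb])
    moreover have "psi j t \<in> {-R..R}" if "j < NN" for j
    proof -
      have "\<bar>real_of_int (psi j t)\<bar> \<le> Rr" using psib[OF that] t by auto
      then show ?thesis unfolding R_def by (simp add: abs_le_iff le_floor_iff floor_le_iff) linarith
    qed
    ultimately show "z \<in> T" unfolding t box_def T_def by auto
  qed
  have cardT: "card T = nat (2 * A + 1) ^ (k - 1) * nat (2 * R + 1) ^ NN"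
  proof -
    have "card (PiE F (\<lambda>_. {-A..A})) = nat (2 * A + 1) ^ card F"
      using finF by (simp add: card_PiE)
    moreover have "card (PiE {..<NN} (\<lambda>_. {-R..R})) = nat (2 * R + 1) ^ NN"
      by (simp add: card_PiE)
    ultimately show ?thesis unfolding T_def cF by (simp add: card_cartesian_product)
  qed
  have "0 \<le> (1 + \<bar>\<xi>\<bar>) / \<epsilon>" using e0 by simp
  then have A0: "0 \<le> A" unfolding A_def by linarith
  have Rr0: "0 \<le> Rr" unfolding Rr_def \<delta>_def using H1 X1 by (simp add: zero_le_mult_iff)
  have R0: "0 \<le> R" unfolding R_def using Rr0 by simp
  have Abound: "real_of_int (2 * A + 1) \<le> (2 * (1 + \<bar>\<xi>\<bar>) + 3) / \<epsilon>"
  proof -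
    have "real_of_int A \<le> (1 + \<bar>\<xi>\<bar>) / \<epsilon> + 1" unfolding A_def by linarith
    then have "real_of_int (2 * A + 1) \<le> 2 * ((1 + \<bar>\<xi>\<bar>) / \<epsilon>) + 3" by linarith
    then have "real_of_int (2 * A + 1) \<le> 2 * (1 + \<bar>\<xi>\<bar>) / \<epsilon> + 3" by (simp only: times_divide_eq_right)
    also have "\<dots> \<le> 2 * (1 + \<bar>\<xi>\<bar>) / \<epsilon> + 3 / \<epsilon>" using e0 e1 by (simp add: le_divide_eq)
    finally show ?thesis by (simp add: add_divide_distrib)
  qed
  have Rbound: "real_of_int (2 * R + 1) \<le> 2 * Rr + 1" unfolding R_def by linarith
  have "real (card T) \<le> ((2 * (1 + \<bar>\<xi>\<bar>) + 3) / \<epsilon>) ^ (k - 1) * (2 * Rr + 1) ^ NN"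
  proof -
    have "real (card T) = real_of_int (2 * A + 1) ^ (k - 1) * real_of_int (2 * R + 1) ^ NN"
      unfolding cardT using A0 R0 by simp
    also have "\<dots> \<le> ((2 * (1 + \<bar>\<xi>\<bar>) + 3) / \<epsilon>) ^ (k - 1) * (2 * Rr + 1) ^ NN"
      apply (rule mult_mono)
      using Abound Rbound A0 R0 by (auto intro!: power_mono)
    finally show ?thesis .
  qed
  also have "\<dots> < real M + 1" using big unfolding Rr_def NN_def \<delta>_def X_def by simp
  finally have "card T < card {0..int M}" by simp
  then have "card (box ` {0..int M}) < card {0..int M}"
    using card_mono[OF finT boxT] by linarith
  then have "\<not> inj_on box {0..int M}" by (rule pigeonhole)
  then obtain t1 t2 where tt: "t1 \<in> {0..int M}" "t2 \<in> {0..int M}" "t1 < t2" "box t1 = box t2"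
    unfolding inj_on_def by (metis linorder_neqE)
  define y where "y = (\<lambda>m. u m t2 - u m t1)"
  have y0: "y 0 = t2 - t1" unfolding y_def u_def by simp
  define g where "g = (\<lambda>l. \<xi> * real_of_int (y l) - real_of_int (y (Suc l)))"
  have gG: "g l = Gv l t2 - Gv l t1" for l unfolding g_def Gv_def y_def by (simp add: algebra_simps)
  have gF: "\<forall>l\<in>F. \<bar>g l\<bar> \<le> \<epsilon>"
  proof
    fix l assume "l \<in> F"
    then have "\<lfloor>Gv l t2 / \<epsilon>\<rfloor> = \<lfloor>Gv l t1 / \<epsilon>\<rfloor>" using tt(4) unfolding box_def
      by (metis (mono_tags, lifting) fst_conv restrict_apply')
    then show "\<bar>g l\<bar> \<le> \<epsilon>" unfolding gG by (rule floor_eq_close[OF e0])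
  qed
  have ybound: "\<bar>real_of_int (y j)\<bar> \<le> real M * X ^ n + 1" if "j \<le> n" for j
  proof -
    have "real_of_int (y j) = real_of_int (t2 - t1) * \<xi> ^ j - (fr j t2 - fr j t1)"
      unfolding y_def by (simp add: uf algebra_simps)
    moreover have "\<bar>real_of_int (t2 - t1) * \<xi> ^ j\<bar> \<le> real M * X ^ n"
    proof -
      have "\<bar>\<xi>\<bar> ^ j \<le> X ^ j" unfolding X_def by (simp add: power_mono)
      also have "\<dots> \<le> X ^ n" using X1 that by (simp add: power_increasing)
      finally have "\<bar>\<xi>\<bar> ^ j \<le> X ^ n" .
      moreover have "\<bar>real_of_int (t2 - t1)\<bar> \<le> real M" using tt by simp
      ultimately show ?thesis unfolding abs_mult power_abs by (simp add: mult_mono)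
    qed
    moreover have "\<bar>fr j t2 - fr j t1\<bar> \<le> 1" using fr01[of j t1] fr01[of j t2] by linarith
    ultimately show ?thesis by linarith
  qed
  have eqs: "\<forall>j<NN. \<bar>\<Sum>r<k. bco a \<xi> k r * g (j + r)\<bar> \<le> \<delta> * (real M * X ^ n + 1)"
  proof (intro allI impI)
    fix j assume j: "j < NN"
    have "psi j t1 = psi j t2" using tt(4) j unfolding box_def
      by (metis (mono_tags, lifting) lessThan_iff restrict_apply' snd_conv)
    moreover have "real_of_int (psi j t) = (\<Sum>i\<le>k. real_of_int (a i) * real_of_int (u (i + j) t))" for t
      unfolding psi_def by simp
    ultimately have "(\<Sum>i\<le>k. real_of_int (a i) * real_of_int (u (i + j) t2)) - (\<Sum>i\<le>k. real_of_int (a i) * real_of_int (u (i + j) t1)) = 0"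
      by (metis diff_self)
    then have z: "(\<Sum>i\<le>k. real_of_int (a i) * real_of_int (y (i + j))) = 0"
      unfolding y_def by (simp add: algebra_simps sum_subtractf)
    have idt: "(\<Sum>r<k. bco a \<xi> k r * g (j + r)) = real_of_int (y j) * Pv a \<xi> k"
      using key_identity[where z="\<lambda>m. real_of_int (y m)" and k=k and a=a and \<xi>=\<xi> and j=j] z
      unfolding g_def by simp
    moreover have "j \<le> n" using j unfolding NN_def by linarith
    ultimately show "\<bar>\<Sum>r<k. bco a \<xi> k r * g (j + r)\<bar> \<le> \<delta> * (real M * X ^ n + 1)"
    proof -
      have yb: "\<bar>real_of_int (y j)\<bar> \<le> real M * X ^ n + 1" using ybound \<open>j \<le> n\<close> by blast
      have "\<bar>real_of_int (y j) * Pv a \<xi> k\<bar> \<le> \<bar>Pv a \<xi> k\<bar> * (real M * X ^ n + 1)"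
        unfolding abs_mult using mult_right_mono[OF yb abs_ge_zero[of "Pv a \<xi> k"]] by (simp add: mult.commute)
      then show ?thesis using idt unfolding \<delta>_def by (simp add: mult.commute)
    qed
  qed
  define Cb where "Cb = C * (\<epsilon> + \<delta> * (real M * X ^ n + 1) / H)"
  have gall: "\<forall>l<n. \<bar>g l\<bar> \<le> Cb"
    using solv[rule_format, of \<epsilon> "\<delta> * (real M * X ^ n + 1)" g] gF eqs e0 X1 unfolding Cb_def NN_def \<delta>_def
    by (simp add: zero_le_mult_iff)
  have Cb0: "0 \<le> Cb" using gall kn k1 by (meson abs_ge_zero le_less_trans less_le_trans not_less zero_less_one order.trans)
  have "\<bar>real_of_int (y 0) * \<xi> ^ m - real_of_int (y m)\<bar> \<le> real n * X ^ n * Cb" if m: "m \<in> {1..n}" for m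
  proof -
    have "real_of_int (y 0) * \<xi> ^ m - real_of_int (y m) = (\<Sum>l<m. \<xi> ^ (m - Suc l) * g l)"
      using tel[where \<xi>=\<xi> and z="\<lambda>m. real_of_int (y m)" and i=m] unfolding g_def by (simp add: mult.commute)
    also have "\<bar>\<dots>\<bar> \<le> (\<Sum>l<m. \<bar>\<xi> ^ (m - Suc l) * g l\<bar>)" by (rule sum_abs)
    also have "\<dots> \<le> (\<Sum>l<m. X ^ n * Cb)"
    proof (rule sum_mono)
      fix l assume l: "l \<in> {..<m}"
      have "\<bar>\<xi>\<bar> ^ (m - Suc l) \<le> X ^ (m - Suc l)" unfolding X_def by (simp add: power_mono)
      also have "\<dots> \<le> X ^ n" using X1 m by (intro power_increasing) auto
      finally have "\<bar>\<xi>\<bar> ^ (m - Suc l) \<le> X ^ n" .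
      moreover have "\<bar>g l\<bar> \<le> Cb" using gall l m by auto
      ultimately show "\<bar>\<xi> ^ (m - Suc l) * g l\<bar> \<le> X ^ n * Cb" unfolding abs_mult power_abs
        using X1 by (simp add: mult_mono)
    qed
    also have "\<dots> = real m * X ^ n * Cb" by simp
    also have "\<dots> \<le> real n * X ^ n * Cb" using m Cb0 X1 by (simp add: mult_right_mono)
    finally show ?thesis .
  qed
  moreover have "1 \<le> y 0" "y 0 \<le> int M" using tt y0 by auto
  ultimately show ?thesis unfolding Cb_def X_def \<delta>_def by blast
qed



definition SOLV :: "(nat \<Rightarrow> int) \<Rightarrow> real \<Rightarrow> nat \<Rightarrow> nat \<Rightarrow> nat set \<Rightarrow> real \<Rightarrow> real \<Rightarrow> bool" where
  "SOLV a \<xi> n k F C H \<longleftrightarrow> (\<forall>g e r. 0 \<le> e \<longrightarrow> 0 \<le> r \<longrightarrow> (\<forall>l\<in>F. \<bar>g l\<bar> \<le> e) \<longrightarrow>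
        (\<forall>j<Suc n - k. \<bar>\<Sum>r<k. bco a \<xi> k r * g (j + r)\<bar> \<le> r) \<longrightarrow> (\<forall>l<n. \<bar>g l\<bar> \<le> C * (e + r / H)))"

lemma asym:
  fixes \<xi> w lam C X0 :: real and n k :: nat
  assumes k1: "1 \<le> k" and kn: "k \<le> n" and wpos: "real n - real k < w" and lam0: "0 \<le> lam"
    and lamw: "lam < (w - real n + real k) / ((real k - 1) * w + real n)" and C0: "0 \<le> C"
  shows "\<exists>H1. \<forall>H a F. H1 \<le> H \<longrightarrow> (\<forall>i\<le>k. \<bar>real_of_int (a i)\<bar> \<le> H) \<longrightarrow> \<bar>Pv a \<xi> k\<bar> \<le> H powr (-w) \<longrightarrow>
     F \<subseteq> {..<n} \<longrightarrow> card F = k - 1 \<longrightarrow> SOLV a \<xi> n k F C H \<longrightarrow>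
     (\<exists>X\<ge>X0. \<exists>x::nat\<Rightarrow>int. 0 < \<bar>x 0\<bar> \<and> \<bar>real_of_int (x 0)\<bar> \<le> X \<and>
        (\<forall>m\<in>{1..n}. \<bar>real_of_int (x 0) * \<xi> ^ m - real_of_int (x m)\<bar> \<le> X powr (- lam)))"
proof -
  define NN where "NN = Suc n - k"
  have NNr: "real NN = real n - real k + 1" unfolding NN_def using kn by (simp add: of_nat_diff)
  define \<beta> where "\<beta> = (w + real k - real n) / real k"
  define \<gamma> where "\<gamma> = ((real k - 1) * w + real n) / real k"
  have kpos: "0 < real k" using k1 by simp
  have w0: "0 < w" using wpos kn by linarith
  have b0: "0 < \<beta>" unfolding \<beta>_def using wpos kpos by simp
  have den: "0 < (real k - 1) * w + real n" using k1 w0 kn by (simp add: add_nonneg_pos)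
  have g1: "1 \<le> \<gamma>"
  proof -
    have "real k \<le> (real k - 1) * w + real n" using k1 w0 kn by (simp add: add_increasing)
    then show ?thesis unfolding \<gamma>_def using kpos by simp
  qed
  have bg: "\<beta> * (real k - 1) + real NN = \<gamma>"
    unfolding \<beta>_def \<gamma>_def NNr using kpos by (simp add: field_simps)
  have wb: "\<beta> \<le> w"
  proof -
    have "1 * w \<le> real k * w" using k1 w0 by (intro mult_right_mono) auto
    then have "w + real k - real n \<le> real k * w" using kn by simp
    then show ?thesis unfolding \<beta>_def using kpos by (simp add: divide_le_eq mult.commute)
  qed
  have gwb: "\<gamma> - w = 1 - \<beta>" unfolding \<beta>_def \<gamma>_def using kpos by (simp add: field_simps)
  have lamg: "lam * \<gamma> < \<beta>"
  proof -
    have "\<beta> / \<gamma> = (w + real k - real n) / ((real k - 1) * w + real n)"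
      unfolding \<beta>_def \<gamma>_def using kpos by simp
    also have "w + real k - real n = w - real n + real k" by simp
    finally have "\<beta> / \<gamma> = (w - real n + real k) / ((real k - 1) * w + real n)" .
    then have "lam < \<beta> / \<gamma>" using lamw by simp
    then show ?thesis using g1 by (simp add: less_divide_eq)
  qed
  define Xi where "Xi = max 1 \<bar>\<xi>\<bar>"
  have Xi1: "1 \<le> Xi" unfolding Xi_def by simp
  define L where "L = 2 * (1 + \<bar>\<xi>\<bar>) + 3"
  have L1: "1 \<le> L" unfolding L_def by simp
  define Q where "Q = 2 * (Xi ^ n + real k + 1) + 1"
  have Q1: "1 \<le> Q" unfolding Q_def using Xi1 by simp
  define K where "K = L ^ (k - 1) * Q ^ NN + 1"
  have K1: "1 \<le> K" unfolding K_def using L1 Q1 by simp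
  define K2 where "K2 = real n * Xi ^ n * C * (2 + 2 * K * Xi ^ n)"
  have K20: "0 \<le> K2" unfolding K2_def using Xi1 K1 C0 by simp
  define H1 where "H1 = max (max 1 X0) (max ((2 * K) powr (1 / \<beta>)) ((K2 * (2 * K) powr lam + 1) powr (1 / (\<beta> - lam * \<gamma>))))"
  show ?thesis
  proof (rule exI[of _ H1], intro allI impI)
    fix H :: real and a :: "nat \<Rightarrow> int" and F :: "nat set"
    assume HH: "H1 \<le> H" and aH: "\<forall>i\<le>k. \<bar>real_of_int (a i)\<bar> \<le> H" and Pw: "\<bar>Pv a \<xi> k\<bar> \<le> H powr (-w)"
      and FS: "F \<subseteq> {..<n}" and cF: "card F = k - 1" and sv: "SOLV a \<xi> n k F C H"
    have H1': "1 \<le> H" "X0 \<le> H" using HH unfolding H1_def by auto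
    have Hpos: "0 < H" using H1' by simp
    have HbK: "2 * K \<le> H powr \<beta>"
    proof -
      have "(2 * K) powr (1 / \<beta>) \<le> H" using HH unfolding H1_def by auto
      then have "((2 * K) powr (1 / \<beta>)) powr \<beta> \<le> H powr \<beta>" using b0 by (intro powr_mono2) auto
      then show ?thesis using b0 K1 by (simp add: powr_powr)
    qed
    have HbK2: "K2 * (2 * K) powr lam + 1 \<le> H powr (\<beta> - lam * \<gamma>)"
    proof -
      have "(K2 * (2 * K) powr lam + 1) powr (1 / (\<beta> - lam * \<gamma>)) \<le> H" using HH unfolding H1_def by auto
      then have "((K2 * (2 * K) powr lam + 1) powr (1 / (\<beta> - lam * \<gamma>))) powr (\<beta> - lam * \<gamma>) \<le> H powr (\<beta> - lam * \<gamma>)"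
        using lamg by (intro powr_mono2) auto
      moreover have "0 < K2 * (2 * K) powr lam + 1" using K20 by (simp add: add_nonneg_pos)
      ultimately show ?thesis using lamg by (simp add: powr_powr)
    qed
    define \<epsilon> where "\<epsilon> = H powr (- \<beta>)"
    have e0: "0 < \<epsilon>" unfolding \<epsilon>_def using Hpos by simp
    have e1: "\<epsilon> \<le> 1" unfolding \<epsilon>_def using H1' b0 by (simp add: powr_minus_divide ge_one_powr_ge_zero)
    define M where "M = nat \<lceil>K * H powr \<gamma>\<rceil>"
    have Hg1: "1 \<le> H powr \<gamma>" using H1' g1 by (simp add: ge_one_powr_ge_zero)
    have HgH: "H \<le> H powr \<gamma>" using powr_mono[OF g1 H1'(1)] Hpos by simp
    have KHg1: "1 * 1 \<le> K * H powr \<gamma>" using K1 Hg1 by (intro mult_mono) auto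
    have KHgH: "1 * H powr \<gamma> \<le> K * H powr \<gamma>" using K1 Hg1 by (intro mult_right_mono) auto
    have Mlow: "K * H powr \<gamma> \<le> real M" unfolding M_def by linarith
    have Mup: "real M \<le> 2 * K * H powr \<gamma>"
    proof -
      have "real M \<le> K * H powr \<gamma> + 1" unfolding M_def using K1 Hg1
        by (simp add: of_nat_nat ceiling_correct)
      also have "\<dots> \<le> 2 * K * H powr \<gamma>" using KHg1 by simp
      finally show ?thesis .
    qed
    define \<delta> where "\<delta> = \<bar>Pv a \<xi> k\<bar>"
    have d0: "0 \<le> \<delta>" unfolding \<delta>_def by simp
    have MXd: "real M * Xi ^ n * \<delta> \<le> Xi ^ n * (2 * K * H powr (- \<beta>)) * H"
    proof -
      have "real M * Xi ^ n * \<delta> \<le> (2 * K * H powr \<gamma>) * Xi ^ n * H powr (-w)"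
        using Mup Pw d0 Xi1 unfolding \<delta>_def by (intro mult_mono) auto
      also have "(2 * K * H powr \<gamma>) * Xi ^ n * H powr (-w) = Xi ^ n * (2 * K) * H powr (\<gamma> - w)"
        by (simp add: powr_diff powr_minus_divide)
      also have "\<dots> = Xi ^ n * (2 * K * H powr (- \<beta>)) * H"
        unfolding gwb using Hpos by (simp add: powr_diff powr_minus_divide)
      finally show ?thesis .
    qed
    have KHb: "2 * K * H powr (- \<beta>) \<le> 1"
      using HbK Hpos by (simp add: powr_minus_divide divide_le_eq)
    have MXd2: "real M * Xi ^ n * \<delta> \<le> Xi ^ n * H"
    proof -
      have "Xi ^ n * (2 * K * H powr (- \<beta>)) * H \<le> Xi ^ n * 1 * H"
        using KHb Xi1 Hpos by (intro mult_right_mono mult_left_mono) auto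
      then show ?thesis using MXd by simp
    qed
    have big: "((2 * (1 + \<bar>\<xi>\<bar>) + 3) / \<epsilon>) ^ (k - 1) *
        (2 * (real M * (max 1 \<bar>\<xi>\<bar>) ^ n * \<bar>Pv a \<xi> k\<bar> + (real k + 1) * H) + 1) ^ (Suc n - k) < real M + 1"
    proof -
      have A: "((2 * (1 + \<bar>\<xi>\<bar>) + 3) / \<epsilon>) ^ (k - 1) = L ^ (k - 1) * H powr (\<beta> * (real k - 1))"
      proof -
        have "(2 * (1 + \<bar>\<xi>\<bar>) + 3) / \<epsilon> = L * H powr \<beta>" unfolding L_def \<epsilon>_def
          by (simp add: powr_minus_divide)
        then show ?thesis using Hpos k1 by (simp add: power_mult_distrib powr_power of_nat_diff mult.commute)
      qed
      have B: "2 * (real M * Xi ^ n * \<delta> + (real k + 1) * H) + 1 \<le> Q * H"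
        using MXd2 H1' unfolding Q_def by (simp add: algebra_simps)
      have B0: "0 \<le> 2 * (real M * Xi ^ n * \<delta> + (real k + 1) * H) + 1" using d0 Xi1 Hpos by simp
      have "((2 * (1 + \<bar>\<xi>\<bar>) + 3) / \<epsilon>) ^ (k - 1) * (2 * (real M * Xi ^ n * \<delta> + (real k + 1) * H) + 1) ^ NN
          \<le> L ^ (k - 1) * H powr (\<beta> * (real k - 1)) * (Q * H) ^ NN"
        unfolding A using B B0 L1 by (intro mult_left_mono power_mono) auto
      also have "\<dots> = L ^ (k - 1) * Q ^ NN * (H powr (\<beta> * (real k - 1)) * H powr (real NN))"
        using Hpos by (simp add: power_mult_distrib powr_realpow)
      also have "\<dots> = (K - 1) * H powr \<gamma>" unfolding K_def bg[symmetric] by (simp add: powr_add)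
      also have "\<dots> < K * H powr \<gamma>" using Hg1 Hpos by (simp add: left_diff_distrib)
      also have "\<dots> \<le> real M + 1" using Mlow by simp
      finally show ?thesis unfolding Xi_def \<delta>_def NN_def .
    qed
    have sv': "\<forall>g e r. 0 \<le> e \<longrightarrow> 0 \<le> r \<longrightarrow> (\<forall>l\<in>F. \<bar>g l\<bar> \<le> e) \<longrightarrow>
        (\<forall>j<Suc n - k. \<bar>\<Sum>r<k. bco a \<xi> k r * g (j + r)\<bar> \<le> r) \<longrightarrow> (\<forall>l<n. \<bar>g l\<bar> \<le> C * (e + r / H))"
      using sv unfolding SOLV_def by blast
    obtain y :: "nat \<Rightarrow> int" where y: "1 \<le> y 0" "y 0 \<le> int M"
      "\<forall>m\<in>{1..n}. \<bar>real_of_int (y 0) * \<xi> ^ m - real_of_int (y m)\<bar>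
      \<le> real n * (max 1 \<bar>\<xi>\<bar>) ^ n * (C * (\<epsilon> + \<bar>Pv a \<xi> k\<bar> * (real M * (max 1 \<bar>\<xi>\<bar>) ^ n + 1) / H))"
      using core[OF k1 kn e0 e1 H1'(1) aH FS cF sv' big] by blast
    have errb: "real n * Xi ^ n * (C * (\<epsilon> + \<delta> * (real M * Xi ^ n + 1) / H)) \<le> K2 * H powr (- \<beta>)"
    proof -
      have dH: "\<delta> / H \<le> H powr (- \<beta>)"
      proof -
        have "\<delta> / H \<le> \<delta>" using d0 H1' by (simp add: divide_le_eq mult_le_cancel_left1)
        also have "\<dots> \<le> H powr (-w)" using Pw unfolding \<delta>_def .
        also have "\<dots> \<le> H powr (- \<beta>)" using wb H1' by (intro powr_mono) auto
        finally show ?thesis .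
      qed
      have "\<delta> * (real M * Xi ^ n + 1) / H = (real M * Xi ^ n * \<delta>) / H + \<delta> / H"
        by (simp add: algebra_simps add_divide_distrib)
      also have "\<dots> \<le> Xi ^ n * (2 * K * H powr (- \<beta>)) + H powr (- \<beta>)"
      proof -
        have "(real M * Xi ^ n * \<delta>) / H \<le> Xi ^ n * (2 * K * H powr (- \<beta>))"
          using MXd Hpos by (simp add: divide_le_eq)
        then show ?thesis using dH by linarith
      qed
      finally have "\<epsilon> + \<delta> * (real M * Xi ^ n + 1) / H \<le> (2 + 2 * K * Xi ^ n) * H powr (- \<beta>)"
        unfolding \<epsilon>_def by (simp add: algebra_simps)
      then have "real n * Xi ^ n * (C * (\<epsilon> + \<delta> * (real M * Xi ^ n + 1) / H))
          \<le> real n * Xi ^ n * (C * ((2 + 2 * K * Xi ^ n) * H powr (- \<beta>)))"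
        using C0 Xi1 by (intro mult_left_mono) auto
      then show ?thesis unfolding K2_def by (simp add: mult.assoc)
    qed
    have Mpos: "0 < real M" using Mlow KHg1 by simp
    have fin: "K2 * H powr (- \<beta>) \<le> real M powr (- lam)"
    proof -
      have "(2 * K * H powr \<gamma>) powr (- lam) \<le> real M powr (- lam)"
        using Mup Mpos lam0 by (intro powr_mono2') auto
      moreover have "(2 * K * H powr \<gamma>) powr (- lam) = (2 * K) powr (- lam) * H powr (- (lam * \<gamma>))"
        using K1 Hpos by (simp add: powr_mult powr_powr mult.commute)
      moreover have "K2 * H powr (- \<beta>) \<le> (2 * K) powr (- lam) * H powr (- (lam * \<gamma>))"
      proof -
        have "K2 * (2 * K) powr lam \<le> H powr (\<beta> - lam * \<gamma>)" using HbK2 by simp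
        then have "K2 * (2 * K) powr lam * ((2 * K) powr (- lam) * H powr (- \<beta>))
            \<le> H powr (\<beta> - lam * \<gamma>) * ((2 * K) powr (- lam) * H powr (- \<beta>))"
          by (intro mult_right_mono) auto
        moreover have "K2 * (2 * K) powr lam * ((2 * K) powr (- lam) * H powr (- \<beta>)) = K2 * H powr (- \<beta>)"
          using K1 by (simp add: powr_minus field_simps)
        moreover have "H powr (\<beta> - lam * \<gamma>) * ((2 * K) powr (- lam) * H powr (- \<beta>)) = (2 * K) powr (- lam) * H powr (- (lam * \<gamma>))"
          using Hpos by (simp add: powr_diff powr_minus field_simps)
        ultimately show ?thesis by simp
      qed
      ultimately show ?thesis by linarith
    qed
    show "\<exists>X\<ge>X0. \<exists>x::nat\<Rightarrow>int. 0 < \<bar>x 0\<bar> \<and> \<bar>real_of_int (x 0)\<bar> \<le> X \<and>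
        (\<forall>m\<in>{1..n}. \<bar>real_of_int (x 0) * \<xi> ^ m - real_of_int (x m)\<bar> \<le> X powr (- lam))"
    proof (intro exI conjI)
      show "X0 \<le> real M" using H1'(2) HgH Mlow KHgH by simp
      show "0 < \<bar>y 0\<bar>" using y by simp
      show "\<bar>real_of_int (y 0)\<bar> \<le> real M" using y by simp
      show "\<forall>m\<in>{1..n}. \<bar>real_of_int (y 0) * \<xi> ^ m - real_of_int (y m)\<bar> \<le> real M powr (- lam)"
        using y(3) errb fin unfolding Xi_def \<delta>_def by fastforce
    qed
  qed
qed

lemma bco_bound:
  assumes "\<forall>i\<le>k. \<bar>real_of_int (a i)\<bar> \<le> H"
  shows "\<bar>bco a \<xi> k r\<bar> \<le> (real k + 1) * (max 1 \<bar>\<xi>\<bar>) ^ k * H"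
proof -
  have H0: "0 \<le> H" using assms by (meson abs_ge_zero order.trans order_refl)
  have "\<bar>bco a \<xi> k r\<bar> \<le> (\<Sum>i\<in>{Suc r..k}. \<bar>real_of_int (a i) * \<xi> ^ (i - Suc r)\<bar>)"
    unfolding bco_def by (rule sum_abs)
  also have "\<dots> \<le> (\<Sum>i\<in>{Suc r..k}. H * (max 1 \<bar>\<xi>\<bar>) ^ k)"
  proof (rule sum_mono)
    fix i assume i: "i \<in> {Suc r..k}"
    have "\<bar>\<xi>\<bar> ^ (i - Suc r) \<le> (max 1 \<bar>\<xi>\<bar>) ^ (i - Suc r)" by (simp add: power_mono)
    also have "\<dots> \<le> (max 1 \<bar>\<xi>\<bar>) ^ k" using i by (intro power_increasing) auto
    finally have "\<bar>\<xi>\<bar> ^ (i - Suc r) \<le> (max 1 \<bar>\<xi>\<bar>) ^ k" .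
    moreover have "\<bar>real_of_int (a i)\<bar> \<le> H" using assms i by auto
    ultimately show "\<bar>real_of_int (a i) * \<xi> ^ (i - Suc r)\<bar> \<le> H * (max 1 \<bar>\<xi>\<bar>) ^ k"
      unfolding abs_mult power_abs using H0 by (intro mult_mono) auto
  qed
  also have "\<dots> = real (card {Suc r..k}) * H * (max 1 \<bar>\<xi>\<bar>) ^ k" by simp
  also have "\<dots> \<le> (real k + 1) * H * (max 1 \<bar>\<xi>\<bar>) ^ k"
    using H0 by (intro mult_right_mono) auto
  finally show ?thesis by (simp add: mult_ac)
qed

lemma bco_top: "1 \<le> k \<Longrightarrow> bco a \<xi> k (k - 1) = real_of_int (a k)"
  unfolding bco_def by simp

lemma solv_lead:
  fixes a :: "nat \<Rightarrow> int" and \<xi> :: real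
  assumes k2: "2 \<le> k" and kn: "k \<le> n" and lead: "\<forall>i\<le>k. \<bar>a i\<bar> \<le> \<bar>a k\<bar>" and ak: "a k \<noteq> 0"
  shows "SOLV a \<xi> n k {..<k - 1} ((1 + real k * (real k + 1) * (max 1 \<bar>\<xi>\<bar>) ^ k) ^ n) \<bar>real_of_int (a k)\<bar>"
  unfolding SOLV_def
proof (intro allI impI)
  fix g :: "nat \<Rightarrow> real" and e r :: real and l :: nat
  assume e0: "0 \<le> e" and r0: "0 \<le> r" and gF: "\<forall>l\<in>{..<k - 1}. \<bar>g l\<bar> \<le> e"
    and eq: "\<forall>j<Suc n - k. \<bar>\<Sum>r<k. bco a \<xi> k r * g (j + r)\<bar> \<le> r" and ln: "l < n"
  have k1: "1 \<le> k" using k2 by simp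
  define H where "H = \<bar>real_of_int (a k)\<bar>"
  have Hpos: "0 < H" unfolding H_def using ak by simp
  define B where "B = (real k + 1) * (max 1 \<bar>\<xi>\<bar>) ^ k"
  have B0: "0 \<le> B" unfolding B_def by simp
  define D where "D = 1 + real k * (real k + 1) * (max 1 \<bar>\<xi>\<bar>) ^ k"
  have D1: "1 \<le> D" unfolding D_def by simp
  define E where "E = e + r / H"
  have E0: "0 \<le> E" unfolding E_def using e0 r0 Hpos by simp
  have aH: "\<forall>i\<le>k. \<bar>real_of_int (a i)\<bar> \<le> H" unfolding H_def using lead by (simp del: of_int_abs add: of_int_abs[symmetric])
  have bb: "\<bar>bco a \<xi> k s\<bar> \<le> B * H" for s
    using bco_bound[OF aH] unfolding B_def by (simp add: mult_ac)
  have main: "\<forall>l<n. \<bar>g l\<bar> \<le> D ^ l * E"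
  proof (intro allI impI)
    fix l assume "l < n"
    then show "\<bar>g l\<bar> \<le> D ^ l * E"
    proof (induction l rule: less_induct)
      case (less l)
      show ?case
      proof (cases "l < k - 1")
        case True
        then have "\<bar>g l\<bar> \<le> e" using gF by auto
        also have "e \<le> E" unfolding E_def using r0 Hpos by simp
        also have "E \<le> D ^ l * E" using D1 E0 by (simp add: mult_le_cancel_right1 one_le_power)
        finally show ?thesis .
      next
        case False
        define j where "j = l - (k - 1)"
        have jl: "j + (k - 1) = l" unfolding j_def using False by simp
        have jN: "j < Suc n - k" unfolding j_def using False less.prems k1 by linarith
        have l1: "l \<ge> 1" using False k2 by linarith
        have split: "(\<Sum>s<k. bco a \<xi> k s * g (j + s)) = bco a \<xi> k (k - 1) * g l + (\<Sum>s<k - 1. bco a \<xi> k s * g (j + s))"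
        proof -
          have "{..<k} = insert (k - 1) {..<k - 1}" using k1 by auto
          then show ?thesis using jl by simp
        qed
        have IHb: "\<bar>g (j + s)\<bar> \<le> D ^ (l - 1) * E" if "s < k - 1" for s
        proof -
          have "j + s < l" using that jl by linarith
          then have "\<bar>g (j + s)\<bar> \<le> D ^ (j + s) * E" using less.IH less.prems by auto
          also have "\<dots> \<le> D ^ (l - 1) * E" using D1 E0 \<open>j + s < l\<close> by (intro mult_right_mono power_increasing) auto
          finally show ?thesis .
        qed
        have sumb: "\<bar>\<Sum>s<k - 1. bco a \<xi> k s * g (j + s)\<bar> \<le> real (k - 1) * (B * H * (D ^ (l - 1) * E))"
        proof -
          have "\<bar>\<Sum>s<k - 1. bco a \<xi> k s * g (j + s)\<bar> \<le> (\<Sum>s<k - 1. \<bar>bco a \<xi> k s * g (j + s)\<bar>)" by (rule sum_abs)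
          also have "\<dots> \<le> (\<Sum>s<k - 1. B * H * (D ^ (l - 1) * E))"
            using bb IHb B0 Hpos by (intro sum_mono) (auto simp: abs_mult intro!: mult_mono)
          finally show ?thesis by simp
        qed
        have "H * \<bar>g l\<bar> = \<bar>bco a \<xi> k (k - 1) * g l\<bar>" using bco_top[OF k1] unfolding H_def by (simp add: abs_mult)
        also have "\<dots> \<le> r + real (k - 1) * (B * H * (D ^ (l - 1) * E))"
        proof -
          have ej: "\<bar>\<Sum>s<k. bco a \<xi> k s * g (j + s)\<bar> \<le> r" using eq jN by blast
          have "bco a \<xi> k (k - 1) * g l = (\<Sum>s<k. bco a \<xi> k s * g (j + s)) - (\<Sum>s<k - 1. bco a \<xi> k s * g (j + s))"
            using split by simp
          then have "\<bar>bco a \<xi> k (k - 1) * g l\<bar> \<le> \<bar>\<Sum>s<k. bco a \<xi> k s * g (j + s)\<bar> + \<bar>\<Sum>s<k - 1. bco a \<xi> k s * g (j + s)\<bar>"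
            by (metis abs_triangle_ineq4)
          then show ?thesis using ej sumb by linarith
        qed
        finally have "H * \<bar>g l\<bar> \<le> r + real (k - 1) * (B * H * (D ^ (l - 1) * E))" .
        then have "\<bar>g l\<bar> \<le> r / H + real (k - 1) * B * (D ^ (l - 1) * E)"
          using Hpos by (simp add: field_simps)
        also have "\<dots> \<le> D ^ (l - 1) * E + real k * B * (D ^ (l - 1) * E)"
        proof -
          have "r / H \<le> E" unfolding E_def using e0 by simp
          also have "E \<le> D ^ (l - 1) * E" using D1 E0 by (simp add: mult_le_cancel_right1 one_le_power)
          finally have "r / H \<le> D ^ (l - 1) * E" .
          moreover have "real (k - 1) * B * (D ^ (l - 1) * E) \<le> real k * B * (D ^ (l - 1) * E)"
            using B0 D1 E0 by (intro mult_right_mono) auto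
          ultimately show ?thesis by linarith
        qed
        also have "\<dots> = D ^ (l - 1) * D * E" unfolding D_def B_def by (simp add: algebra_simps)
        also have "\<dots> = D ^ l * E" using l1 by (metis One_nat_def Suc_pred' diff_zero le_less_Suc_eq less_one not_le power_Suc2 zero_less_iff_neq_zero)
        finally show ?thesis .
      qed
    qed
  qed
  have "\<bar>g l\<bar> \<le> D ^ l * E" using main ln by auto
  also have "\<dots> \<le> D ^ n * E" using D1 E0 ln by (intro mult_right_mono power_increasing) auto
  finally show "\<bar>g l\<bar> \<le> (1 + real k * (real k + 1) * (max 1 \<bar>\<xi>\<bar>) ^ k) ^ n * (e + r / \<bar>real_of_int (a k)\<bar>)"
    unfolding D_def E_def H_def .
qed



lemma f_gt:
  fixes lam w :: real and n k :: nat
  assumes k2: "2 \<le> k" and kn: "k \<le> n" and lam0: "0 \<le> lam" and lamk: "lam * (real k - 1) < 1"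
    and wt: "(lam * real n + real n - real k) / (1 - lam * (real k - 1)) < w"
  shows "lam < (w - real n + real k) / ((real k - 1) * w + real n)" and "real n - real k < w"
proof -
  have p: "0 < 1 - lam * (real k - 1)" using lamk by simp
  have t0: "0 \<le> (lam * real n + real n - real k) / (1 - lam * (real k - 1))"
  proof -
    have "0 \<le> lam * real n" using lam0 by simp
    then show ?thesis using p kn by (intro divide_nonneg_pos) auto
  qed
  have w0: "0 < w" using t0 wt by linarith
  have den: "0 < (real k - 1) * w + real n" using k2 w0 kn by (simp add: add_pos_nonneg)
  have "lam * real n + real n - real k < w * (1 - lam * (real k - 1))" using wt p by (simp add: divide_less_eq)
  then have "lam * ((real k - 1) * w + real n) < w - real n + real k" by (simp add: algebra_simps)
  then show "lam < (w - real n + real k) / ((real k - 1) * w + real n)" using den by (simp add: less_divide_eq)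
  have "0 \<le> lam * ((real k - 1) * w + real n)" using lam0 den by simp
  then show "real n - real k < w" using \<open>lam * ((real k - 1) * w + real n) < w - real n + real k\<close> by linarith
qed

lemma sup_bound:
  fixes W Lam :: "real set" and n k :: nat
  assumes k2: "2 \<le> k" and kn: "k \<le> n" and m1: "-1 \<in> W"
    and neg: "\<And>lam. lam < 0 \<Longrightarrow> lam \<in> Lam"
    and pos: "\<And>w lam. w \<in> W \<Longrightarrow> real n - real k < w \<Longrightarrow> 0 \<le> lam \<Longrightarrow>
                 lam < (w - real n + real k) / ((real k - 1) * w + real n) \<Longrightarrow> lam \<in> Lam"
  shows "bound_fun n k (Sup (ereal ` W)) \<le> Sup (ereal ` Lam)"
proof -
  have below: "ereal v \<le> Sup (ereal ` Lam)" if h: "\<And>lam. lam < v \<Longrightarrow> lam \<in> Lam" for v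
  proof (rule dense_le)
    fix y :: ereal assume "y < ereal v"
    then show "y \<le> Sup (ereal ` Lam)"
    proof (cases y)
      case (real r)
      then have "r < v" using \<open>y < ereal v\<close> by simp
      then have "ereal r \<in> ereal ` Lam" using h by auto
      then show ?thesis using real by (simp add: Sup_upper)
    qed auto
  qed
  have kk: "0 < real k - 1" using k2 by simp
  have key: "lam \<in> Lam" if kh: "0 \<le> lam" "lam * (real k - 1) < 1"
     "\<exists>w\<in>W. (lam * real n + real n - real k) / (1 - lam * (real k - 1)) < w" for lam
  proof -
    obtain w where w: "w \<in> W" "(lam * real n + real n - real k) / (1 - lam * (real k - 1)) < w" using kh(3) by blast
    show ?thesis using pos[OF w(1) f_gt(2)[OF k2 kn kh(1,2) w(2)] kh(1) f_gt(1)[OF k2 kn kh(1,2) w(2)]] .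
  qed
  have Sm1: "ereal (-1) \<le> Sup (ereal ` W)" using m1 by (simp add: Sup_upper)
  show ?thesis
  proof (cases "Sup (ereal ` W)")
    case (real r)
    have r1: "-1 \<le> r" using Sm1 real by simp
    have den: "0 < (real k - 1) * r + real n"
    proof -
      have "(real k - 1) * (-1) \<le> (real k - 1) * r" using r1 kk by (intro mult_left_mono) auto
      then have "1 - real k \<le> (real k - 1) * r" by simp
      moreover have "real k \<le> real n" using kn by simp
      ultimately show ?thesis by linarith
    qed
    have "ereal ((r - real n + real k) / ((real k - 1) * r + real n)) \<le> Sup (ereal ` Lam)"
    proof (rule below)
      fix lam assume lam: "lam < (r - real n + real k) / ((real k - 1) * r + real n)"
      show "lam \<in> Lam"
      proof (cases "lam < 0")
        case True then show ?thesis by (rule neg)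
      next
        case False
        then have lam0: "0 \<le> lam" by simp
        have ml: "lam * ((real k - 1) * r + real n) < r - real n + real k" using lam den by (simp add: less_divide_eq)
        have lamk: "lam * (real k - 1) < 1"
        proof (rule ccontr)
          assume "\<not> lam * (real k - 1) < 1"
          then have "1 \<le> lam * (real k - 1)" by simp
          then have "1 * (r + 1) \<le> lam * (real k - 1) * (r + 1)" using r1 by (intro mult_right_mono) auto
          then have "r + 1 \<le> lam * ((real k - 1) * r + real n) - lam * (real n - real k + 1)"
            by (simp add: algebra_simps)
          moreover have "0 \<le> lam * (real n - real k + 1)" using lam0 kn by simp
          moreover have "real k \<le> real n" using kn by simp
          ultimately show False using ml by linarith
        qed
        have p: "0 < 1 - lam * (real k - 1)" using lamk by simp
        have "(lam * real n + real n - real k) / (1 - lam * (real k - 1)) < r"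
          using ml p by (simp add: divide_less_eq algebra_simps)
        then have "ereal ((lam * real n + real n - real k) / (1 - lam * (real k - 1))) < Sup (ereal ` W)"
          using real by simp
        then obtain w' where "w' \<in> ereal ` W" "ereal ((lam * real n + real n - real k) / (1 - lam * (real k - 1))) < w'"
          using less_Sup_iff by blast
        then have "\<exists>w\<in>W. (lam * real n + real n - real k) / (1 - lam * (real k - 1)) < w" by auto
        then show ?thesis using key lam0 lamk by blast
      qed
    qed
    then show ?thesis using real unfolding bound_fun_def by simp
  next
    case PInf
    have "ereal (1 / (real k - 1)) \<le> Sup (ereal ` Lam)"
    proof (rule below)
      fix lam assume lam: "lam < 1 / (real k - 1)"
      show "lam \<in> Lam"
      proof (cases "lam < 0")
        case True then show ?thesis by (rule neg)
      next
        case False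
        then have lam0: "0 \<le> lam" by simp
        have lamk: "lam * (real k - 1) < 1" using lam kk by (simp add: less_divide_eq)
        have "ereal ((lam * real n + real n - real k) / (1 - lam * (real k - 1))) < Sup (ereal ` W)"
          using PInf by simp
        then obtain w' where "w' \<in> ereal ` W" "ereal ((lam * real n + real n - real k) / (1 - lam * (real k - 1))) < w'"
          using less_Sup_iff by blast
        then have "\<exists>w\<in>W. (lam * real n + real n - real k) / (1 - lam * (real k - 1)) < w" by auto
        then show ?thesis using key lam0 lamk by blast
      qed
    qed
    then show ?thesis using PInf unfolding bound_fun_def by simp
  next
    case MInf
    then show ?thesis unfolding bound_fun_def by simp
  qed
qed




definition LamS :: "nat \<Rightarrow> real \<Rightarrow> real set" where
  "LamS n \<xi> = {lam. \<forall>X0. \<exists>X\<ge>X0. \<exists>x :: nat \<Rightarrow> int.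
      0 < \<bar>x 0\<bar> \<and> \<bar>real_of_int (x 0)\<bar> \<le> X \<and>
      (\<forall>m\<in>{1..n}. \<bar>real_of_int (x 0) * \<xi> ^ m - real_of_int (x m)\<bar> \<le> X powr (- lam))}"

definition WL :: "nat \<Rightarrow> real \<Rightarrow> real set" where
  "WL k \<xi> = {w. \<forall>X0. \<exists>X\<ge>X0. \<exists>x :: nat \<Rightarrow> int.
      0 < \<bar>\<Sum>j\<le>k. real_of_int (x j) * \<xi> ^ j\<bar> \<and>
      \<bar>\<Sum>j\<le>k. real_of_int (x j) * \<xi> ^ j\<bar> \<le> X powr (- w) \<and>
      (\<forall>j\<le>k. \<bar>real_of_int (x j)\<bar> \<le> X) \<and>
      (\<forall>j<k. \<bar>x j\<bar> \<le> \<bar>x k\<bar>)}"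

definition WS :: "nat \<Rightarrow> real \<Rightarrow> real set" where
  "WS k \<xi> = {w. \<forall>X0. \<exists>X\<ge>X0. \<exists>x :: nat \<Rightarrow> int.
      0 < \<bar>\<Sum>j\<le>k. real_of_int (x j) * \<xi> ^ j\<bar> \<and>
      \<bar>\<Sum>j\<le>k. real_of_int (x j) * \<xi> ^ j\<bar> \<le> X powr (- w) \<and>
      (\<forall>j\<le>k. \<bar>real_of_int (x j)\<bar> \<le> X)}"

lemma lambda_eq: "lambda_exp n \<xi> = Sup (ereal ` LamS n \<xi>)"
  unfolding lambda_exp_def LamS_def by simp
lemma wl_eq: "w_lead_exp k \<xi> = Sup (ereal ` WL k \<xi>)"
  unfolding w_lead_exp_def WL_def by simp
lemma ws_eq: "w_exp k \<xi> = Sup (ereal ` WS k \<xi>)"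
  unfolding w_exp_def WS_def by simp

lemma neg_in: assumes "lam < 0" shows "lam \<in> LamS n \<xi>"
  unfolding LamS_def
proof (intro CollectI allI)
  fix X0 :: real
  define X where "X = max 1 X0"
  define x :: "nat \<Rightarrow> int" where "x = (\<lambda>m. if m = 0 then 1 else \<lfloor>\<xi> ^ m\<rfloor>)"
  have X1: "1 \<le> X" unfolding X_def by simp
  have "1 \<le> X powr (- lam)" using X1 assms by (intro ge_one_powr_ge_zero) auto
  moreover have "\<bar>real_of_int (x 0) * \<xi> ^ m - real_of_int (x m)\<bar> \<le> 1" if "m \<in> {1..n}" for m
  proof -
    have fc: "real_of_int \<lfloor>\<xi> ^ m\<rfloor> \<le> \<xi> ^ m" "\<xi> ^ m < real_of_int \<lfloor>\<xi> ^ m\<rfloor> + 1"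
      using floor_correct[of "\<xi> ^ m"] by auto
    have "m \<noteq> 0" using that by auto
    then have eq: "real_of_int (x 0) * \<xi> ^ m - real_of_int (x m) = \<xi> ^ m - real_of_int \<lfloor>\<xi> ^ m\<rfloor>"
      unfolding x_def by simp
    show ?thesis unfolding eq abs_le_iff using fc by (intro conjI; linarith)
  qed
  ultimately show "\<exists>X\<ge>X0. \<exists>x :: nat \<Rightarrow> int. 0 < \<bar>x 0\<bar> \<and> \<bar>real_of_int (x 0)\<bar> \<le> X \<and>
      (\<forall>m\<in>{1..n}. \<bar>real_of_int (x 0) * \<xi> ^ m - real_of_int (x m)\<bar> \<le> X powr (- lam))"
    using X1 unfolding X_def by (intro exI[of _ X] exI[of _ x] conjI) (force simp: x_def X_def)+
qed

lemma m1_in: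
  fixes \<xi> :: real assumes xi0: "\<xi> \<noteq> 0"
  shows "-1 \<in> WL k \<xi>" "-1 \<in> WS k \<xi>"
proof -
  define x :: "nat \<Rightarrow> int" where "x = (\<lambda>j. if j = k then 1 else 0)"
  have sx: "(\<Sum>j\<le>k. real_of_int (x j) * \<xi> ^ j) = \<xi> ^ k"
  proof -
    have "(\<Sum>j\<le>k. real_of_int (x j) * \<xi> ^ j) = (\<Sum>j\<le>k. if j = k then \<xi> ^ j else 0)"
      by (intro sum.cong) (auto simp: x_def)
    then show ?thesis by simp
  qed
  have P: "\<exists>X\<ge>X0. 0 < \<bar>\<Sum>j\<le>k. real_of_int (x j) * \<xi> ^ j\<bar> \<and>
      \<bar>\<Sum>j\<le>k. real_of_int (x j) * \<xi> ^ j\<bar> \<le> X powr (- (-1)) \<and>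
      (\<forall>j\<le>k. \<bar>real_of_int (x j)\<bar> \<le> X) \<and> (\<forall>j<k. \<bar>x j\<bar> \<le> \<bar>x k\<bar>)" for X0 :: real
  proof (intro exI[of _ "max (max 1 X0) (\<bar>\<xi>\<bar> ^ k)"] conjI)
    show "0 < \<bar>\<Sum>j\<le>k. real_of_int (x j) * \<xi> ^ j\<bar>" unfolding sx using xi0 by simp
    show "\<bar>\<Sum>j\<le>k. real_of_int (x j) * \<xi> ^ j\<bar> \<le> max (max 1 X0) (\<bar>\<xi>\<bar> ^ k) powr (- (- 1))"
      unfolding sx by (simp add: power_abs)
    show "\<forall>j\<le>k. \<bar>real_of_int (x j)\<bar> \<le> max (max 1 X0) (\<bar>\<xi>\<bar> ^ k)" unfolding x_def by auto
    show "\<forall>j<k. \<bar>x j\<bar> \<le> \<bar>x k\<bar>" unfolding x_def by auto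
  qed auto
  show "-1 \<in> WL k \<xi>" unfolding WL_def using P by blast
  show "-1 \<in> WS k \<xi>" unfolding WS_def using P by blast
qed

lemma finite_min:
  fixes B \<xi> :: real
  shows "\<exists>\<eta>>0. \<forall>x::nat\<Rightarrow>int. (\<forall>j\<le>k. \<bar>real_of_int (x j)\<bar> \<le> B) \<longrightarrow> Pv x \<xi> k \<noteq> 0 \<longrightarrow> \<eta> \<le> \<bar>Pv x \<xi> k\<bar>"
proof -
  define S where "S = (\<lambda>h. Pv h \<xi> k) ` (PiE {..k} (\<lambda>_. {-\<lfloor>B\<rfloor>..\<lfloor>B\<rfloor>}))"
  have fS: "finite S" unfolding S_def by (intro finite_imageI finite_PiE) auto
  define V where "V = abs ` (S - {0})"
  have fV: "finite V" unfolding V_def using fS by simp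
  have Vpos: "\<forall>v\<in>V. 0 < v" unfolding V_def by auto
  define \<eta> where "\<eta> = Min (insert 1 V)"
  have "0 < \<eta>" unfolding \<eta>_def using fV Vpos by (subst Min_gr_iff) auto
  moreover have "\<eta> \<le> \<bar>Pv x \<xi> k\<bar>" if xb: "\<forall>j\<le>k. \<bar>real_of_int (x j)\<bar> \<le> B" and nz: "Pv x \<xi> k \<noteq> 0" for x :: "nat \<Rightarrow> int"
  proof -
    have "restrict x {..k} \<in> PiE {..k} (\<lambda>_. {-\<lfloor>B\<rfloor>..\<lfloor>B\<rfloor>})"
    proof (rule restrict_PiE_iff[THEN iffD2], intro ballI)
      fix j assume "j \<in> {..k}"
      then have h: "\<bar>real_of_int (x j)\<bar> \<le> B" using xb by auto
      then have "real_of_int (x j) \<le> B" "real_of_int (- x j) \<le> B" by auto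
      then have "x j \<le> \<lfloor>B\<rfloor>" "- x j \<le> \<lfloor>B\<rfloor>" by (simp_all only: le_floor_iff)
      then show "x j \<in> {-\<lfloor>B\<rfloor>..\<lfloor>B\<rfloor>}" by simp
    qed
    moreover have "Pv (restrict x {..k}) \<xi> k = Pv x \<xi> k" unfolding Pv_def by (intro sum.cong) auto
    ultimately have "Pv x \<xi> k \<in> S" unfolding S_def by (metis image_eqI)
    then have "\<bar>Pv x \<xi> k\<bar> \<in> V" unfolding V_def using nz by auto
    then show ?thesis unfolding \<eta>_def using fV by (intro Min_le) auto
  qed
  ultimately show ?thesis by blast
qed

lemma part1_mem:
  fixes \<xi> w lam :: real and n k :: nat
  assumes k2: "2 \<le> k" and kn: "k \<le> n" and wW: "w \<in> WL k \<xi>" and wpos: "real n - real k < w"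
    and lam0: "0 \<le> lam" and lamw: "lam < (w - real n + real k) / ((real k - 1) * w + real n)"
  shows "lam \<in> LamS n \<xi>"
  unfolding LamS_def
proof (intro CollectI allI)
  fix X0 :: real
  have k1: "1 \<le> k" using k2 by simp
  have w0: "0 < w" using wpos kn by linarith
  define C where "C = (1 + real k * (real k + 1) * (max 1 \<bar>\<xi>\<bar>) ^ k) ^ n"
  have C0: "0 \<le> C" unfolding C_def by simp
  obtain H1 where H1: "\<forall>H a F. H1 \<le> H \<longrightarrow> (\<forall>i\<le>k. \<bar>real_of_int (a i)\<bar> \<le> H) \<longrightarrow> \<bar>Pv a \<xi> k\<bar> \<le> H powr (-w) \<longrightarrow>
     F \<subseteq> {..<n} \<longrightarrow> card F = k - 1 \<longrightarrow> SOLV a \<xi> n k F C H \<longrightarrow>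
     (\<exists>X\<ge>X0. \<exists>x::nat\<Rightarrow>int. 0 < \<bar>x 0\<bar> \<and> \<bar>real_of_int (x 0)\<bar> \<le> X \<and>
        (\<forall>m\<in>{1..n}. \<bar>real_of_int (x 0) * \<xi> ^ m - real_of_int (x m)\<bar> \<le> X powr (- lam)))"
    using asym[OF k1 kn wpos lam0 lamw C0, of \<xi> X0] by blast
  obtain \<eta> where eta: "\<eta> > 0" "\<forall>x::nat\<Rightarrow>int. (\<forall>j\<le>k. \<bar>real_of_int (x j)\<bar> \<le> H1) \<longrightarrow> Pv x \<xi> k \<noteq> 0 \<longrightarrow> \<eta> \<le> \<bar>Pv x \<xi> k\<bar>"
    using finite_min[of k H1 \<xi>] by blast
  obtain Xp x where Xp: "Xp \<ge> max 1 ((2 / \<eta>) powr (1 / w))"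
    and P0: "0 < \<bar>Pv x \<xi> k\<bar>" and Pb: "\<bar>Pv x \<xi> k\<bar> \<le> Xp powr (- w)"
    and xb: "\<forall>j\<le>k. \<bar>real_of_int (x j)\<bar> \<le> Xp" and lead: "\<forall>j<k. \<bar>x j\<bar> \<le> \<bar>x k\<bar>"
    using wW unfolding WL_def Pv_def by blast
  have Xp1: "1 \<le> Xp" using Xp by simp
  have "2 / \<eta> \<le> Xp powr w"
  proof -
    have "(2 / \<eta>) powr (1 / w) \<le> Xp" using Xp by simp
    then have "((2 / \<eta>) powr (1 / w)) powr w \<le> Xp powr w" using w0 by (intro powr_mono2) auto
    then show ?thesis using w0 eta(1) by (simp add: powr_powr)
  qed
  then have "Xp powr (- w) \<le> \<eta> / 2" using eta(1) Xp1
    by (simp add: powr_minus_divide divide_le_eq field_simps)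
  then have small: "\<bar>Pv x \<xi> k\<bar> < \<eta>" using Pb eta(1) by linarith
  then have "\<not> (\<forall>j\<le>k. \<bar>real_of_int (x j)\<bar> \<le> H1)" using eta(2) P0 by force
  then obtain j where j: "j \<le> k" "H1 < \<bar>real_of_int (x j)\<bar>" by force
  have lead': "\<forall>i\<le>k. \<bar>x i\<bar> \<le> \<bar>x k\<bar>" using lead by (metis le_neq_implies_less order_refl)
  define H where "H = \<bar>real_of_int (x k)\<bar>"
  have HH1: "H1 \<le> H"
  proof -
    have "\<bar>x j\<bar> \<le> \<bar>x k\<bar>" using lead' j(1) by blast
    then have "\<bar>real_of_int (x j)\<bar> \<le> \<bar>real_of_int (x k)\<bar>" by (metis of_int_abs of_int_le_iff)
    then show ?thesis unfolding H_def using j(2) by linarith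
  qed
  have xk: "x k \<noteq> 0"
  proof
    assume "x k = 0"
    then have "\<forall>i\<le>k. x i = 0" using lead' by auto
    then have "Pv x \<xi> k = 0" unfolding Pv_def by simp
    then show False using P0 by simp
  qed
  have Hpos: "0 < H" unfolding H_def using xk by simp
  have HX: "H \<le> Xp" unfolding H_def using xb by simp
  have aH: "\<forall>i\<le>k. \<bar>real_of_int (x i)\<bar> \<le> H" unfolding H_def using lead'
    by (metis of_int_abs of_int_le_iff)
  have PH: "\<bar>Pv x \<xi> k\<bar> \<le> H powr (- w)"
  proof -
    have "Xp powr (- w) \<le> H powr (- w)" using Hpos HX w0 by (intro powr_mono2') auto
    then show ?thesis using Pb by linarith
  qed
  have FS: "{..<k - 1} \<subseteq> {..<n}" using kn by auto
  have cF: "card {..<k - 1} = k - 1" by simp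
  have sv: "SOLV x \<xi> n k {..<k - 1} C H" unfolding C_def H_def by (rule solv_lead[OF k2 kn lead' xk])
  show "\<exists>X\<ge>X0. \<exists>x::nat\<Rightarrow>int. 0 < \<bar>x 0\<bar> \<and> \<bar>real_of_int (x 0)\<bar> \<le> X \<and>
        (\<forall>m\<in>{1..n}. \<bar>real_of_int (x 0) * \<xi> ^ m - real_of_int (x m)\<bar> \<le> X powr (- lam))"
    using H1 HH1 aH PH FS cF sv by blast
qed

theorem part1:
  fixes k n :: nat and \<xi> :: real
  assumes "2 \<le> k" and "k \<le> n" and "\<not> algebraic \<xi>"
  shows "lambda_exp n \<xi> \<ge> bound_fun n k (w_lead_exp k \<xi>)"
proof -
  have xi0: "\<xi> \<noteq> 0" using assms(3) by auto
  show ?thesis unfolding lambda_eq wl_eq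
    by (rule sup_bound[OF assms(1,2) m1_in(1)[OF xi0] neg_in part1_mem[OF assms(1,2)]])
qed



lemma SOLV_mono: "SOLV a \<xi> n k F C H \<Longrightarrow> C \<le> C' \<Longrightarrow> 0 < H \<Longrightarrow> SOLV a \<xi> n k F C' H"
  unfolding SOLV_def
proof (intro allI impI)
  fix g e r l
  assume S: "\<forall>g e r. 0 \<le> e \<longrightarrow> 0 \<le> r \<longrightarrow> (\<forall>l\<in>F. \<bar>g l\<bar> \<le> e) \<longrightarrow>
        (\<forall>j<Suc n - k. \<bar>\<Sum>r<k. bco a \<xi> k r * g (j + r)\<bar> \<le> r) \<longrightarrow> (\<forall>l<n. \<bar>g l\<bar> \<le> C * (e + r / H))"
    and CC: "C \<le> C'" and H0: "0 < H" and e0: "0 \<le> e" and r0: "0 \<le> r" and gF: "\<forall>l\<in>F. \<bar>g l\<bar> \<le> e"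
    and eq: "\<forall>j<Suc n - k. \<bar>\<Sum>r<k. bco a \<xi> k r * g (j + r)\<bar> \<le> r" and l: "l < n"
  have "\<bar>g l\<bar> \<le> C * (e + r / H)" using S e0 r0 gF eq l by blast
  also have "\<dots> \<le> C' * (e + r / H)" using CC e0 r0 H0 by (intro mult_right_mono) auto
  finally show "\<bar>g l\<bar> \<le> C' * (e + r / H)" .
qed

lemma bco_step: "1 \<le> r \<Longrightarrow> r \<le> k \<Longrightarrow> bco a \<xi> k (r - 1) = real_of_int (a r) + \<xi> * bco a \<xi> k r"
proof -
  assume r: "1 \<le> r" "r \<le> k"
  have "{Suc (r - 1)..k} = insert r {Suc r..k}" using r by auto
  then have "bco a \<xi> k (r - 1) = real_of_int (a r) * \<xi> ^ (r - Suc (r - 1)) + (\<Sum>i\<in>{Suc r..k}. real_of_int (a i) * \<xi> ^ (i - Suc (r - 1)))"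
    unfolding bco_def by simp
  also have "(\<Sum>i\<in>{Suc r..k}. real_of_int (a i) * \<xi> ^ (i - Suc (r - 1))) = \<xi> * bco a \<xi> k r"
    unfolding bco_def sum_distrib_left
  proof (intro sum.cong refl)
    fix i assume "i \<in> {Suc r..k}"
    then have "i - Suc (r - 1) = Suc (i - Suc r)" using r by auto
    then have e: "\<xi> ^ (i - Suc (r - 1)) = \<xi> * \<xi> ^ (i - Suc r)" by (subst \<open>i - Suc (r - 1) = Suc (i - Suc r)\<close>) (rule power_Suc)
    show "real_of_int (a i) * \<xi> ^ (i - Suc (r - 1)) = \<xi> * (real_of_int (a i) * \<xi> ^ (i - Suc r))"
      unfolding e by (simp add: algebra_simps)
  qed
  finally show ?thesis using r by simp
qed

lemma bco_zero: "Pv a \<xi> k = real_of_int (a 0) + \<xi> * bco a \<xi> k 0"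
proof -
  have "{..k} = insert 0 {Suc 0..k}" by auto
  then have "Pv a \<xi> k = real_of_int (a 0) + (\<Sum>i\<in>{Suc 0..k}. real_of_int (a i) * \<xi> ^ i)"
    unfolding Pv_def by simp
  also have "(\<Sum>i\<in>{Suc 0..k}. real_of_int (a i) * \<xi> ^ i) = \<xi> * bco a \<xi> k 0"
    unfolding bco_def sum_distrib_left
  proof (intro sum.cong refl)
    fix i assume "i \<in> {Suc 0..k}"
    then have "i = Suc (i - Suc 0)" by auto
    then obtain m where "i = Suc m" by blast
    then have e: "\<xi> ^ i = \<xi> * \<xi> ^ (i - Suc 0)" by simp
    show "real_of_int (a i) * \<xi> ^ i = \<xi> * (real_of_int (a i) * \<xi> ^ (i - Suc 0))"
      by (subst e) (simp add: algebra_simps)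
  qed
  finally show ?thesis .
qed

lemma bco_beyond: "k \<le> r \<Longrightarrow> bco a \<xi> k r = 0"
  unfolding bco_def by simp

lemma a_le_b:
  assumes i: "i \<le> k" and k1: "1 \<le> k" and Pv: "\<bar>Pv a \<xi> k\<bar> \<le> \<bar>real_of_int (a i)\<bar> / 2"
    and Bm: "\<forall>r<k. \<bar>bco a \<xi> k r\<bar> \<le> Bm"
  shows "\<bar>real_of_int (a i)\<bar> \<le> 2 * (1 + \<bar>\<xi>\<bar>) * Bm"
proof -
  have Bm0: "0 \<le> Bm" using Bm k1 abs_ge_zero[of "bco a \<xi> k 0"] by force
  show ?thesis
  proof (cases "i = 0")
    case True
    have "real_of_int (a 0) = Pv a \<xi> k - \<xi> * bco a \<xi> k 0" using bco_zero[of a \<xi> k] by simp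
    then have "\<bar>real_of_int (a 0)\<bar> \<le> \<bar>Pv a \<xi> k\<bar> + \<bar>\<xi>\<bar> * \<bar>bco a \<xi> k 0\<bar>" by (simp add: abs_mult[symmetric] abs_triangle_ineq4)
    also have "\<bar>\<xi>\<bar> * \<bar>bco a \<xi> k 0\<bar> \<le> \<bar>\<xi>\<bar> * Bm" using Bm k1 by (intro mult_left_mono) auto
    finally show ?thesis using Pv True Bm0 by (simp add: algebra_simps)
  next
    case False
    have "real_of_int (a i) = bco a \<xi> k (i - 1) - \<xi> * bco a \<xi> k i" using bco_step[of i k a \<xi>] False i by simp
    then have "\<bar>real_of_int (a i)\<bar> \<le> \<bar>bco a \<xi> k (i - 1)\<bar> + \<bar>\<xi>\<bar> * \<bar>bco a \<xi> k i\<bar>" by (simp add: abs_mult[symmetric] abs_triangle_ineq4)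
    also have "\<bar>bco a \<xi> k (i - 1)\<bar> \<le> Bm" using Bm False i by auto
    also have "\<bar>\<xi>\<bar> * \<bar>bco a \<xi> k i\<bar> \<le> \<bar>\<xi>\<bar> * Bm"
    proof (cases "i < k")
      case True then show ?thesis using Bm by (intro mult_left_mono) auto
    next
      case False then show ?thesis using bco_beyond[of k i a \<xi>] Bm0 i by simp
    qed
    finally show ?thesis using Bm0 by (simp add: algebra_simps)
  qed
qed

lemma solv_k2:
  fixes a :: "nat \<Rightarrow> int" and \<xi> H :: real
  assumes n2: "2 \<le> n" and H0: "0 < H"
    and HB: "H \<le> 2 * (1 + \<bar>\<xi>\<bar>) * max \<bar>bco a \<xi> 2 0\<bar> \<bar>bco a \<xi> 2 1\<bar>"
  shows "\<exists>F. F \<subseteq> {..<n} \<and> card F = 1 \<and> SOLV a \<xi> n 2 F (2 * real n * (1 + \<bar>\<xi>\<bar>)) H"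
proof -
  define b0 where "b0 = bco a \<xi> 2 0"
  define b1 where "b1 = bco a \<xi> 2 1"
  define Bm where "Bm = max \<bar>b0\<bar> \<bar>b1\<bar>"
  have HB': "H \<le> 2 * (1 + \<bar>\<xi>\<bar>) * Bm" using HB unfolding Bm_def b0_def b1_def .
  have "0 \<le> Bm" unfolding Bm_def by simp
  moreover have "Bm \<noteq> 0"
  proof
    assume "Bm = 0"
    then have "H \<le> 0" using HB' by simp
    then show False using H0 by simp
  qed
  ultimately have Bpos: "0 < Bm" by simp
  define Z where "Z = 2 * (1 + \<bar>\<xi>\<bar>)"
  have Z1: "1 \<le> Z" unfolding Z_def by simp
  have rB: "r / Bm \<le> Z * (r / H)" if "0 \<le> r" for r
  proof -
    have "H \<le> Z * Bm" using HB unfolding Z_def Bm_def b0_def b1_def by simp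
    then have "r * H \<le> r * (Z * Bm)" using that by (intro mult_left_mono) auto
    then show ?thesis using Bpos H0 by (simp add: field_simps)
  qed
  have eqform: "(\<Sum>r<2. bco a \<xi> 2 r * g (j + r)) = b0 * g j + b1 * g (Suc j)" for g :: "nat \<Rightarrow> real" and j
    unfolding b0_def b1_def by (simp add: numeral_2_eq_2)
  have fin: "\<bar>g l\<bar> \<le> 2 * real n * (1 + \<bar>\<xi>\<bar>) * (e + r / H)"
    if "\<bar>g l\<bar> \<le> e + real n * (r / Bm)" "0 \<le> e" "0 \<le> r" for g l e r
  proof -
    have "real n * (r / Bm) \<le> real n * (Z * (r / H))" using rB[OF that(3)] by (intro mult_left_mono) auto
    moreover have "e \<le> real n * Z * e"
    proof -
      have "1 * 1 \<le> real n * Z" using Z1 n2 by (intro mult_mono) auto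
      then have "1 * e \<le> (real n * Z) * e" using that(2) by (intro mult_right_mono) auto
      then show ?thesis by simp
    qed
    ultimately have "\<bar>g l\<bar> \<le> real n * Z * e + real n * Z * (r / H)" using that(1) by (simp add: mult_ac)
    then show ?thesis unfolding Z_def by (simp add: algebra_simps)
  qed
  show ?thesis
  proof (cases "\<bar>b0\<bar> \<le> \<bar>b1\<bar>")
    case True
    then have Bm1: "Bm = \<bar>b1\<bar>" unfolding Bm_def by simp
    show ?thesis
    proof (intro exI[of _ "{0}"] conjI)
      show "{0} \<subseteq> {..<n}" using n2 by auto
      show "card {0::nat} = 1" by simp
      show "SOLV a \<xi> n 2 {0} (2 * real n * (1 + \<bar>\<xi>\<bar>)) H" unfolding SOLV_def
      proof (intro allI impI)
        fix g :: "nat \<Rightarrow> real" and e r :: real and l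
        assume e0: "0 \<le> e" and r0: "0 \<le> r" and gF: "\<forall>l\<in>{0}. \<bar>g l\<bar> \<le> e"
          and eq: "\<forall>j<Suc n - 2. \<bar>\<Sum>r<2. bco a \<xi> 2 r * g (j + r)\<bar> \<le> r" and ln: "l < n"
        have ind: "\<bar>g l\<bar> \<le> e + real l * (r / Bm)" if "l < n" for l
          using that
        proof (induction l)
          case 0 then show ?case using gF by simp
        next
          case (Suc l)
          have lj: "l < Suc n - 2" using Suc.prems by simp
          have "\<bar>\<Sum>r<2. bco a \<xi> 2 r * g (l + r)\<bar> \<le> r" using eq lj by blast
          then have "\<bar>b0 * g l + b1 * g (Suc l)\<bar> \<le> r" using eqform[of g l] by simp
          moreover have "\<bar>b1 * g (Suc l)\<bar> \<le> \<bar>b0 * g l + b1 * g (Suc l)\<bar> + \<bar>b0 * g l\<bar>"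
            using abs_triangle_ineq4[of "b0 * g l + b1 * g (Suc l)" "b0 * g l"] by simp
          ultimately have "\<bar>b1\<bar> * \<bar>g (Suc l)\<bar> \<le> r + \<bar>b0\<bar> * \<bar>g l\<bar>"
            by (simp add: abs_mult)
          also have "\<bar>b0\<bar> * \<bar>g l\<bar> \<le> \<bar>b1\<bar> * \<bar>g l\<bar>" using True by (intro mult_right_mono) auto
          finally have "\<bar>g (Suc l)\<bar> \<le> r / Bm + \<bar>g l\<bar>" using Bpos unfolding Bm1 by (simp add: field_simps)
          then show ?case using Suc.IH Suc.prems by (simp add: algebra_simps)
        qed
        have "\<bar>g l\<bar> \<le> e + real n * (r / Bm)"
        proof -
          have "real l * (r / Bm) \<le> real n * (r / Bm)" using ln r0 Bpos by (intro mult_right_mono) auto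
          then show ?thesis using ind[OF ln] by linarith
        qed
        then show "\<bar>g l\<bar> \<le> 2 * real n * (1 + \<bar>\<xi>\<bar>) * (e + r / H)" by (rule fin[OF _ e0 r0])
      qed
    qed
  next
    case False
    then have Bm0: "Bm = \<bar>b0\<bar>" unfolding Bm_def by simp
    show ?thesis
    proof (intro exI[of _ "{n - 1}"] conjI)
      show "{n - 1} \<subseteq> {..<n}" using n2 by auto
      show "card {n - 1} = 1" by simp
      show "SOLV a \<xi> n 2 {n - 1} (2 * real n * (1 + \<bar>\<xi>\<bar>)) H" unfolding SOLV_def
      proof (intro allI impI)
        fix g :: "nat \<Rightarrow> real" and e r :: real and l
        assume e0: "0 \<le> e" and r0: "0 \<le> r" and gF: "\<forall>l\<in>{n - 1}. \<bar>g l\<bar> \<le> e"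
          and eq: "\<forall>j<Suc n - 2. \<bar>\<Sum>r<2. bco a \<xi> 2 r * g (j + r)\<bar> \<le> r" and ln: "l < n"
        have ind: "\<bar>g (n - 1 - i)\<bar> \<le> e + real i * (r / Bm)" if "i < n" for i
          using that
        proof (induction i)
          case 0 then show ?case using gF by simp
        next
          case (Suc i)
          define j where "j = n - 1 - Suc i"
          have jj: "Suc j = n - 1 - i" unfolding j_def using Suc.prems by linarith
          have lj: "j < Suc n - 2" using Suc.prems unfolding j_def by simp
          have "\<bar>\<Sum>r<2. bco a \<xi> 2 r * g (j + r)\<bar> \<le> r" using eq lj by blast
          then have "\<bar>b0 * g j + b1 * g (Suc j)\<bar> \<le> r" using eqform[of g j] by simp
          moreover have "\<bar>b0 * g j\<bar> \<le> \<bar>b0 * g j + b1 * g (Suc j)\<bar> + \<bar>b1 * g (Suc j)\<bar>"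
            using abs_triangle_ineq4[of "b0 * g j + b1 * g (Suc j)" "b1 * g (Suc j)"] by simp
          ultimately have "\<bar>b0\<bar> * \<bar>g j\<bar> \<le> r + \<bar>b1\<bar> * \<bar>g (Suc j)\<bar>"
            by (simp add: abs_mult)
          also have "\<bar>b1\<bar> * \<bar>g (Suc j)\<bar> \<le> \<bar>b0\<bar> * \<bar>g (Suc j)\<bar>" using False by (intro mult_right_mono) auto
          finally have "\<bar>g j\<bar> \<le> r / Bm + \<bar>g (Suc j)\<bar>" using Bpos unfolding Bm0 by (simp add: field_simps)
          then show ?case using Suc.IH Suc.prems unfolding jj[symmetric] j_def by (simp add: algebra_simps)
        qed
        have "l = n - 1 - (n - 1 - l)" using ln by simp
        then have "\<bar>g l\<bar> \<le> e + real (n - 1 - l) * (r / Bm)" using ind[of "n - 1 - l"] ln by simp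
        also have "real (n - 1 - l) * (r / Bm) \<le> real n * (r / Bm)" using r0 Bpos by (intro mult_right_mono) auto
        finally have "\<bar>g l\<bar> \<le> e + real n * (r / Bm)" by simp
        then show "\<bar>g l\<bar> \<le> 2 * real n * (1 + \<bar>\<xi>\<bar>) * (e + r / H)" by (rule fin[OF _ e0 r0])
      qed
    qed
  qed
qed



lemma gap_exists:
  fixes v :: "nat \<Rightarrow> real" and Bm :: real and k :: nat
  assumes Bpos: "0 < Bm"
  shows "\<exists>s\<le>k. \<forall>r<k. \<not> (Bm / 3 ^ Suc s \<le> v r \<and> v r < Bm / 3 ^ s)"
proof (rule ccontr)
  assume "\<not> ?thesis"
  then have all: "\<forall>s\<in>{..k}. \<exists>r. r < k \<and> Bm / 3 ^ Suc s \<le> v r \<and> v r < Bm / 3 ^ s" by auto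
  define ch where "ch = (\<lambda>s. SOME r. r < k \<and> Bm / 3 ^ Suc s \<le> v r \<and> v r < Bm / 3 ^ s)"
  have chp: "ch s < k \<and> Bm / 3 ^ Suc s \<le> v (ch s) \<and> v (ch s) < Bm / 3 ^ s" if "s \<in> {..k}" for s
    unfolding ch_def by (rule someI_ex) (use all that in blast)
  have disj: "s = t" if "Bm / 3 ^ Suc s \<le> x" "x < Bm / 3 ^ s" "Bm / 3 ^ Suc t \<le> x" "x < Bm / 3 ^ t" for s t :: nat and x :: real
  proof (rule ccontr)
    assume "s \<noteq> t"
    then consider "Suc s \<le> t" | "Suc t \<le> s" by linarith
    then show False
    proof cases
      case 1
      have "Bm / 3 ^ t \<le> Bm / 3 ^ Suc s" using Bpos 1 by (intro divide_left_mono power_increasing) auto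
      then show False using that by linarith
    next
      case 2
      have "Bm / 3 ^ s \<le> Bm / 3 ^ Suc t" using Bpos 2 by (intro divide_left_mono power_increasing) auto
      then show False using that by linarith
    qed
  qed
  have "inj_on ch {..k}"
  proof (rule inj_onI)
    fix s t assume "s \<in> {..k}" "t \<in> {..k}" "ch s = ch t"
    then show "s = t" using chp[of s] chp[of t] disj[of s "v (ch s)" t] by auto
  qed
  moreover have "ch ` {..k} \<subseteq> {..<k}" using chp by auto
  ultimately have "card {..k} \<le> card {..<k}" by (intro card_inj_on_le) auto
  then show False by simp
qed

lemma solv_n:
  fixes a :: "nat \<Rightarrow> int" and \<xi> H Bm :: real and k :: nat
  assumes k1: "1 \<le> k" and H0: "0 < H"
    and Bmax: "\<forall>r<k. \<bar>bco a \<xi> k r\<bar> \<le> Bm" and Batt: "\<exists>r<k. \<bar>bco a \<xi> k r\<bar> = Bm"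
    and HB: "H \<le> 2 * (1 + \<bar>\<xi>\<bar>) * Bm"
  shows "\<exists>F. F \<subseteq> {..<Suc k} \<and> card F = k - 1 \<and> SOLV a \<xi> (Suc k) k F (9 ^ Suc k * (2 * (1 + \<bar>\<xi>\<bar>) + real k)) H"
proof -
  define b where "b = bco a \<xi> k"
  have bk: "b r = 0" if "k \<le> r" for r unfolding b_def using bco_beyond[OF that] .
  have Bpos: "0 < Bm"
  proof -
    have "0 \<le> Bm" using Batt by auto
    moreover have "Bm \<noteq> 0" using HB H0 by auto
    ultimately show ?thesis by simp
  qed
  have ball: "\<bar>b r\<bar> \<le> Bm" for r using Bmax bk Bpos unfolding b_def by (cases "r < k") auto
  obtain s where s: "s \<le> k" "\<forall>r<k. \<not> (Bm / 3 ^ Suc s \<le> \<bar>b r\<bar> \<and> \<bar>b r\<bar> < Bm / 3 ^ s)"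
    using gap_exists[OF Bpos, of k "\<lambda>r. \<bar>b r\<bar>"] by blast
  define W :: real where "W = 3 ^ s"
  have W1: "1 \<le> W" unfolding W_def by simp
  have W9: "W * W \<le> 9 ^ k"
  proof -
    have "W \<le> 3 ^ k" unfolding W_def using s(1) by (intro power_increasing) auto
    then have "W * W \<le> 3 ^ k * 3 ^ k" using W1 by (intro mult_mono) auto
    also have "\<dots> = 9 ^ k" by (simp add: power_mult_distrib[symmetric])
    finally show ?thesis .
  qed
  define T where "T = Bm / W"
  have Tpos: "0 < T" unfolding T_def using Bpos W1 by simp
  have TB: "T \<le> Bm" unfolding T_def using Bpos W1 by (simp add: divide_le_eq mult_le_cancel_left1)
  have gapr: "T \<le> \<bar>b r\<bar> \<or> \<bar>b r\<bar> < T / 3" for r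
  proof (cases "r < k")
    case True
    have "Bm / 3 ^ Suc s = T / 3" unfolding T_def W_def by simp
    then show ?thesis using s(2) True unfolding T_def W_def by force
  next
    case False then show ?thesis using bk Tpos by simp
  qed
  define A where "A = {r. r < k \<and> T \<le> \<bar>b r\<bar>}"
  have fA: "finite A" unfolding A_def by simp
  have neA: "A \<noteq> {}"
  proof -
    obtain r where "r < k" "\<bar>b r\<bar> = Bm" using Batt unfolding b_def by blast
    then have "r \<in> A" unfolding A_def using TB by simp
    then show ?thesis by blast
  qed
  define p where "p = Min A"
  define q where "q = Max A"
  have pA: "p \<in> A" unfolding p_def using fA neA by simp
  have qA: "q \<in> A" unfolding q_def using fA neA by simp
  have pq: "p \<le> q" using Min_le[OF fA qA] unfolding p_def by simp
  have qk: "q < k" using qA unfolding A_def by simp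
  have bp: "T \<le> \<bar>b p\<bar>" and bq: "T \<le> \<bar>b q\<bar>" using pA qA unfolding A_def by auto
  have bq1: "\<bar>b (Suc q)\<bar> < T / 3"
  proof -
    have "Suc q \<notin> A" using fA unfolding q_def by (metis Max_ge Suc_n_not_le_n)
    then have "\<not> T \<le> \<bar>b (Suc q)\<bar>" using bk Tpos unfolding A_def by (cases "Suc q < k") auto
    then show ?thesis using gapr by blast
  qed
  define cp where "cp = (if p = 0 then 0 else b (p - 1))"
  have cpb: "\<bar>cp\<bar> < T / 3"
  proof (cases "p = 0")
    case True then show ?thesis unfolding cp_def using Tpos by simp
  next
    case False
    have "p - 1 \<notin> A"
    proof
      assume "p - 1 \<in> A"
      then have "p \<le> p - 1" unfolding p_def using fA by simp
      then show False using False by simp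
    qed
    then have "\<not> T \<le> \<bar>b (p - 1)\<bar>" unfolding A_def using pA unfolding A_def by auto
    then show ?thesis unfolding cp_def using False gapr by auto
  qed
  define D where "D = b p * b q - b (Suc q) * cp"
  have Dlow: "8 / 9 * (T * T) \<le> \<bar>D\<bar>"
  proof -
    have "T * T \<le> \<bar>b p\<bar> * \<bar>b q\<bar>" using bp bq Tpos by (intro mult_mono) auto
    moreover have "\<bar>b (Suc q)\<bar> * \<bar>cp\<bar> \<le> (T / 3) * (T / 3)" using bq1 cpb by (intro mult_mono) auto
    moreover have "\<bar>b p * b q\<bar> - \<bar>b (Suc q) * cp\<bar> \<le> \<bar>D\<bar>" unfolding D_def by (rule abs_triangle_ineq2)
    ultimately show ?thesis by (simp add: abs_mult)
  qed
  have "0 < 8 / 9 * (T * T)" using Tpos by simp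
  then have Dpos: "0 < \<bar>D\<bar>" using Dlow by linarith
  define F where "F = {..k} - {p, Suc q}"
  have pSq: "p \<noteq> Suc q" using pq by simp
  have FS: "F \<subseteq> {..<Suc k}" unfolding F_def by auto
  have cF: "card F = k - 1"
  proof -
    have "{p, Suc q} \<subseteq> {..k}" using pq qk by auto
    then have "card F = card {..k} - card {p, Suc q}" unfolding F_def by (simp add: card_Diff_subset)
    then show ?thesis using pSq by simp
  qed
  define C where "C = (9::real) ^ Suc k * (2 * (1 + \<bar>\<xi>\<bar>) + real k)"
  have C1: "1 \<le> C"
  proof -
    have n9: "1 \<le> (9::real) ^ Suc k" by (rule one_le_power) simp
    have "1 * 1 \<le> (9::real) ^ Suc k * (2 * (1 + \<bar>\<xi>\<bar>) + real k)" using n9 by (intro mult_mono) auto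
    then show ?thesis unfolding C_def by simp
  qed
  show ?thesis
  proof (intro exI[of _ F] conjI FS cF)
    show "SOLV a \<xi> (Suc k) k F (9 ^ Suc k * (2 * (1 + \<bar>\<xi>\<bar>) + real k)) H"
      unfolding SOLV_def C_def[symmetric]
    proof (intro allI impI)
      fix g :: "nat \<Rightarrow> real" and e r :: real and l
      assume e0: "0 \<le> e" and r0: "0 \<le> r" and gF: "\<forall>l\<in>F. \<bar>g l\<bar> \<le> e"
        and eq: "\<forall>j<Suc (Suc k) - k. \<bar>\<Sum>r<k. bco a \<xi> k r * g (j + r)\<bar> \<le> r" and ln: "l < Suc k"
      have eCb: "e \<le> C * (e + r / H)"
      proof -
        have "e \<le> e + r / H" using r0 H0 by simp
        also have "\<dots> \<le> C * (e + r / H)"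
        proof -
          have "0 \<le> e + r / H" using e0 r0 H0 by simp
          then have "1 * (e + r / H) \<le> C * (e + r / H)" using C1 by (intro mult_right_mono) auto
          then show ?thesis by simp
        qed
        finally show ?thesis .
      qed
      have E0: "\<bar>\<Sum>l\<le>k. b l * g l\<bar> \<le> r"
      proof -
        have "\<bar>\<Sum>r<k. bco a \<xi> k r * g (0 + r)\<bar> \<le> r" using eq[rule_format, of 0] by simp
        moreover have "(\<Sum>l\<le>k. b l * g l) = (\<Sum>r<k. bco a \<xi> k r * g (0 + r))"
          using bk unfolding b_def by (simp add: lessThan_Suc_atMost[symmetric])
        ultimately show ?thesis by simp
      qed
      define c1 where "c1 = (\<lambda>l. if l = 0 then 0 else b (l - 1))"
      have E1: "\<bar>\<Sum>l\<le>k. c1 l * g l\<bar> \<le> r"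
      proof -
        have "\<bar>\<Sum>r<k. bco a \<xi> k r * g (1 + r)\<bar> \<le> r" using eq[rule_format, of 1] by simp
        moreover have "(\<Sum>l\<le>k. c1 l * g l) = (\<Sum>r<k. bco a \<xi> k r * g (1 + r))"
        proof -
          have "(\<Sum>l\<le>k. c1 l * g l) = (\<Sum>l<Suc k. c1 l * g l)" by (simp add: lessThan_Suc_atMost)
          also have "\<dots> = c1 0 * g 0 + (\<Sum>l<k. c1 (Suc l) * g (Suc l))" by (rule sum.lessThan_Suc_shift)
          also have "\<dots> = (\<Sum>r<k. bco a \<xi> k r * g (1 + r))" unfolding c1_def b_def by simp
          finally show ?thesis .
        qed
        ultimately show ?thesis by simp
      qed
      have c1b: "\<bar>c1 l\<bar> \<le> Bm" for l unfolding c1_def using ball Bpos by auto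
      have splitk: "(\<Sum>l\<le>k. f l) = f p + f (Suc q) + (\<Sum>l\<in>F. f l)" for f :: "nat \<Rightarrow> real"
      proof -
        have "{..k} = insert p (insert (Suc q) F)" unfolding F_def using pq qk by auto
        moreover have "p \<notin> insert (Suc q) F" unfolding F_def using pSq by auto
        moreover have "Suc q \<notin> F" unfolding F_def by auto
        moreover have "finite F" unfolding F_def by simp
        ultimately show ?thesis by (simp only:) (simp add: algebra_simps)
      qed
      have restb: "\<bar>\<Sum>l\<in>F. c l * g l\<bar> \<le> real k * Bm * e" if cb: "\<And>l. \<bar>c l\<bar> \<le> Bm" for c :: "nat \<Rightarrow> real"
      proof -
        have "\<bar>\<Sum>l\<in>F. c l * g l\<bar> \<le> (\<Sum>l\<in>F. \<bar>c l * g l\<bar>)" by (rule sum_abs)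
        also have "\<dots> \<le> (\<Sum>l\<in>F. Bm * e)" using cb gF Bpos by (intro sum_mono) (auto simp: abs_mult intro!: mult_mono)
        also have "\<dots> = real (k - 1) * Bm * e" using cF by simp
        also have "\<dots> \<le> real k * Bm * e" using Bpos e0 by (intro mult_right_mono) auto
        finally show ?thesis .
      qed
      define s0 where "s0 = b p * g p + b (Suc q) * g (Suc q)"
      define s1 where "s1 = cp * g p + b q * g (Suc q)"
      have s0b: "\<bar>s0\<bar> \<le> r + real k * Bm * e"
      proof -
        have "s0 = (\<Sum>l\<le>k. b l * g l) - (\<Sum>l\<in>F. b l * g l)" unfolding s0_def splitk by simp
        then have "\<bar>s0\<bar> \<le> \<bar>\<Sum>l\<le>k. b l * g l\<bar> + \<bar>\<Sum>l\<in>F. b l * g l\<bar>" by (metis abs_triangle_ineq4)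
        then show ?thesis using E0 restb[of b] ball by fastforce
      qed
      have s1b: "\<bar>s1\<bar> \<le> r + real k * Bm * e"
      proof -
        have "c1 p = cp" unfolding c1_def cp_def by simp
        moreover have "c1 (Suc q) = b q" unfolding c1_def by simp
        ultimately have "s1 = (\<Sum>l\<le>k. c1 l * g l) - (\<Sum>l\<in>F. c1 l * g l)" unfolding s1_def splitk by simp
        then have "\<bar>s1\<bar> \<le> \<bar>\<Sum>l\<le>k. c1 l * g l\<bar> + \<bar>\<Sum>l\<in>F. c1 l * g l\<bar>" by (metis abs_triangle_ineq4)
        then show ?thesis using E1 restb[of c1] c1b by fastforce
      qed
      define Sb where "Sb = r + real k * Bm * e"
      have Sb0: "0 \<le> Sb" unfolding Sb_def using r0 e0 Bpos by simp
      have solvebound: "\<bar>x\<bar> \<le> C * (e + r / H)" if hx: "\<bar>D\<bar> * \<bar>x\<bar> \<le> Bm * \<bar>s0\<bar> + Bm * \<bar>s1\<bar>" for x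
      proof -
        have "8 / 9 * (T * T) * \<bar>x\<bar> \<le> \<bar>D\<bar> * \<bar>x\<bar>" using Dlow by (intro mult_right_mono) auto
        also have "\<dots> \<le> Bm * \<bar>s0\<bar> + Bm * \<bar>s1\<bar>" by (rule hx)
        also have "\<dots> \<le> Bm * Sb + Bm * Sb" using s0b s1b Bpos unfolding Sb_def by (intro add_mono mult_left_mono) auto
        finally have h1: "8 / 9 * (T * T) * \<bar>x\<bar> \<le> 2 * Bm * Sb" by simp
        have TT: "T * T = Bm * Bm / (W * W)" unfolding T_def by simp
        have h2: "8 * (Bm * Bm) * \<bar>x\<bar> \<le> 18 * Bm * Sb * (W * W)"
          using h1 W1 unfolding TT by (simp add: field_simps)
        have h3: "Bm * (8 * Bm * \<bar>x\<bar>) \<le> Bm * (18 * Sb * (W * W))" using h2 by (simp add: algebra_simps)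
        then have h4: "8 * Bm * \<bar>x\<bar> \<le> 18 * Sb * (W * W)" using Bpos by (simp only: mult_le_cancel_left_pos)
        define st where "st = (2 * (1 + \<bar>\<xi>\<bar>) + real k) * (e + r / H)"
        have st0: "0 \<le> st" unfolding st_def using e0 r0 H0 by simp
        have h6: "Sb \<le> Bm * st"
        proof -
          have "r * H \<le> r * (2 * (1 + \<bar>\<xi>\<bar>) * Bm)" using HB r0 by (intro mult_left_mono) auto
          then have "r \<le> Bm * (2 * (1 + \<bar>\<xi>\<bar>) * (r / H))" using H0 by (simp add: field_simps)
          moreover have "2 * (1 + \<bar>\<xi>\<bar>) * (r / H) + real k * e \<le> st"
            unfolding st_def using e0 r0 H0 by (simp add: algebra_simps)
          then have "Bm * (2 * (1 + \<bar>\<xi>\<bar>) * (r / H) + real k * e) \<le> Bm * st" using Bpos by (intro mult_left_mono) auto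
          ultimately show ?thesis unfolding Sb_def by (simp add: algebra_simps)
        qed
        have "8 * Bm * \<bar>x\<bar> \<le> 18 * (W * W) * Sb" using h4 by (simp add: mult_ac)
        also have "\<dots> \<le> 18 * 9 ^ k * Sb" using W9 Sb0 by (intro mult_right_mono mult_left_mono) auto
        also have "\<dots> \<le> 18 * 9 ^ k * (Bm * st)" using h6 by (intro mult_left_mono) auto
        finally have "Bm * (8 * \<bar>x\<bar>) \<le> Bm * (18 * 9 ^ k * st)" by (simp add: mult_ac)
        then have h7: "8 * \<bar>x\<bar> \<le> 18 * 9 ^ k * st" using Bpos by (simp only: mult_le_cancel_left_pos)
        have "18 * 9 ^ k * st \<le> 8 * (9 ^ Suc k * st)" using st0 by simp
        then have "\<bar>x\<bar> \<le> 9 ^ Suc k * st" using h7 by linarith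
        then show ?thesis unfolding C_def st_def by (simp add: mult_ac)
      qed
      have gp: "\<bar>g p\<bar> \<le> C * (e + r / H)"
      proof (rule solvebound)
        have "D * g p = b q * s0 - b (Suc q) * s1" unfolding D_def s0_def s1_def by (simp add: algebra_simps)
        then have "\<bar>D\<bar> * \<bar>g p\<bar> \<le> \<bar>b q\<bar> * \<bar>s0\<bar> + \<bar>b (Suc q)\<bar> * \<bar>s1\<bar>"
          by (metis abs_mult abs_triangle_ineq4)
        also have "\<dots> \<le> Bm * \<bar>s0\<bar> + Bm * \<bar>s1\<bar>" using ball by (intro add_mono mult_right_mono) auto
        finally show "\<bar>D\<bar> * \<bar>g p\<bar> \<le> Bm * \<bar>s0\<bar> + Bm * \<bar>s1\<bar>" .
      qed
      have gq: "\<bar>g (Suc q)\<bar> \<le> C * (e + r / H)"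
      proof (rule solvebound)
        have "D * g (Suc q) = b p * s1 - cp * s0" unfolding D_def s0_def s1_def by (simp add: algebra_simps)
        then have "\<bar>D\<bar> * \<bar>g (Suc q)\<bar> \<le> \<bar>b p\<bar> * \<bar>s1\<bar> + \<bar>cp\<bar> * \<bar>s0\<bar>"
          by (metis abs_mult abs_triangle_ineq4)
        also have "\<dots> \<le> Bm * \<bar>s1\<bar> + Bm * \<bar>s0\<bar>" using ball cpb Tpos TB by (intro add_mono mult_right_mono) auto
        finally show "\<bar>D\<bar> * \<bar>g (Suc q)\<bar> \<le> Bm * \<bar>s0\<bar> + Bm * \<bar>s1\<bar>" by (simp add: add.commute)
      qed
      show "\<bar>g l\<bar> \<le> C * (e + r / H)"
      proof (cases "l \<in> F")
        case True then show ?thesis using gF eCb by force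
      next
        case False
        then have "l = p \<or> l = Suc q" unfolding F_def using ln by auto
        then show ?thesis using gp gq by auto
      qed
    qed
  qed
qed



lemma solv_part2:
  fixes a :: "nat \<Rightarrow> int" and \<xi> H :: real and n k :: nat
  assumes k2: "2 \<le> k" and kn: "k \<le> n" and cases: "k = 2 \<or> n = k + 1"
    and i0: "i0 \<le> k" and Hi0: "H = \<bar>real_of_int (a i0)\<bar>" and H0: "0 < H"
    and Pv: "\<bar>Pv a \<xi> k\<bar> \<le> H / 2"
  shows "\<exists>F. F \<subseteq> {..<n} \<and> card F = k - 1 \<and>
     SOLV a \<xi> n k F (2 * real n * (1 + \<bar>\<xi>\<bar>) + 9 ^ Suc k * (2 * (1 + \<bar>\<xi>\<bar>) + real k)) H"
proof -
  have k1: "1 \<le> k" using k2 by simp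
  define Bm where "Bm = Max ((\<lambda>r. \<bar>bco a \<xi> k r\<bar>) ` {..<k})"
  have fin: "finite ((\<lambda>r. \<bar>bco a \<xi> k r\<bar>) ` {..<k})" by simp
  have "0 \<in> {..<k}" using k1 by simp
  then have ne: "(\<lambda>r. \<bar>bco a \<xi> k r\<bar>) ` {..<k} \<noteq> {}" by blast
  have Bmax: "\<forall>r<k. \<bar>bco a \<xi> k r\<bar> \<le> Bm" unfolding Bm_def using fin by auto
  have Batt: "\<exists>r<k. \<bar>bco a \<xi> k r\<bar> = Bm"
  proof -
    have "Bm \<in> (\<lambda>r. \<bar>bco a \<xi> k r\<bar>) ` {..<k}" unfolding Bm_def using fin ne by (rule Max_in)
    then show ?thesis by auto
  qed
  have HB: "H \<le> 2 * (1 + \<bar>\<xi>\<bar>) * Bm"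
    using a_le_b[OF i0 k1 _ Bmax] Pv Hi0 by simp
  define C2 where "C2 = 2 * real n * (1 + \<bar>\<xi>\<bar>) + 9 ^ Suc k * (2 * (1 + \<bar>\<xi>\<bar>) + real k)"
  have "\<exists>F. F \<subseteq> {..<n} \<and> card F = k - 1 \<and> SOLV a \<xi> n k F C2 H"
  proof (cases "k = 2")
    case True
    have "Bm = max \<bar>bco a \<xi> 2 0\<bar> \<bar>bco a \<xi> 2 1\<bar>"
    proof -
      have "(\<lambda>r. \<bar>bco a \<xi> k r\<bar>) ` {..<k} = {\<bar>bco a \<xi> 2 0\<bar>, \<bar>bco a \<xi> 2 1\<bar>}"
        using True by (auto simp: lessThan_def numeral_2_eq_2 less_Suc_eq)
      then show ?thesis unfolding Bm_def by (simp add: max_def)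
    qed
    then have HB2: "H \<le> 2 * (1 + \<bar>\<xi>\<bar>) * max \<bar>bco a \<xi> 2 0\<bar> \<bar>bco a \<xi> 2 1\<bar>" using HB by simp
    have n2: "2 \<le> n" using kn True by simp
    obtain F where F: "F \<subseteq> {..<n}" "card F = 1" "SOLV a \<xi> n 2 F (2 * real n * (1 + \<bar>\<xi>\<bar>)) H"
      using solv_k2[OF n2 H0 HB2] by blast
    have "SOLV a \<xi> n 2 F C2 H" unfolding C2_def by (rule SOLV_mono[OF F(3) _ H0]) simp
    then show ?thesis using F True by (intro exI[of _ F]) simp
  next
    case False
    then have nk: "n = Suc k" using cases by simp
    obtain F where F: "F \<subseteq> {..<Suc k}" "card F = k - 1" "SOLV a \<xi> (Suc k) k F (9 ^ Suc k * (2 * (1 + \<bar>\<xi>\<bar>) + real k)) H"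
      using solv_n[OF k1 H0 Bmax Batt HB] by blast
    have "SOLV a \<xi> (Suc k) k F C2 H" unfolding C2_def by (rule SOLV_mono[OF F(3) _ H0]) (simp add: nk)
    then show ?thesis using F nk by (intro exI[of _ F]) simp
  qed
  then show ?thesis unfolding C2_def .
qed

lemma part2_mem:
  fixes \<xi> w lam :: real and n k :: nat
  assumes k2: "2 \<le> k" and kn: "k \<le> n" and cases: "k = 2 \<or> n = k + 1"
    and wW: "w \<in> WS k \<xi>" and wpos: "real n - real k < w"
    and lam0: "0 \<le> lam" and lamw: "lam < (w - real n + real k) / ((real k - 1) * w + real n)"
  shows "lam \<in> LamS n \<xi>"
  unfolding LamS_def
proof (intro CollectI allI)
  fix X0 :: real
  have k1: "1 \<le> k" using k2 by simp
  have w0: "0 < w" using wpos kn by linarith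
  define C where "C = 2 * real n * (1 + \<bar>\<xi>\<bar>) + 9 ^ Suc k * (2 * (1 + \<bar>\<xi>\<bar>) + real k)"
  have C0: "0 \<le> C" unfolding C_def by simp
  obtain H1 where H1: "\<forall>H a F. H1 \<le> H \<longrightarrow> (\<forall>i\<le>k. \<bar>real_of_int (a i)\<bar> \<le> H) \<longrightarrow> \<bar>Pv a \<xi> k\<bar> \<le> H powr (-w) \<longrightarrow>
     F \<subseteq> {..<n} \<longrightarrow> card F = k - 1 \<longrightarrow> SOLV a \<xi> n k F C H \<longrightarrow>
     (\<exists>X\<ge>X0. \<exists>x::nat\<Rightarrow>int. 0 < \<bar>x 0\<bar> \<and> \<bar>real_of_int (x 0)\<bar> \<le> X \<and>
        (\<forall>m\<in>{1..n}. \<bar>real_of_int (x 0) * \<xi> ^ m - real_of_int (x m)\<bar> \<le> X powr (- lam)))"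
    using asym[OF k1 kn wpos lam0 lamw C0, of \<xi> X0] by blast
  obtain \<eta> where eta: "\<eta> > 0" "\<forall>x::nat\<Rightarrow>int. (\<forall>j\<le>k. \<bar>real_of_int (x j)\<bar> \<le> max H1 2) \<longrightarrow> Pv x \<xi> k \<noteq> 0 \<longrightarrow> \<eta> \<le> \<bar>Pv x \<xi> k\<bar>"
    using finite_min[of k "max H1 2" \<xi>] by blast
  obtain Xp x where Xp: "Xp \<ge> max 1 ((2 / \<eta>) powr (1 / w))"
    and P0: "0 < \<bar>Pv x \<xi> k\<bar>" and Pb: "\<bar>Pv x \<xi> k\<bar> \<le> Xp powr (- w)"
    and xb: "\<forall>j\<le>k. \<bar>real_of_int (x j)\<bar> \<le> Xp"
    using wW unfolding WS_def Pv_def by blast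
  have Xp1: "1 \<le> Xp" using Xp by simp
  have "2 / \<eta> \<le> Xp powr w"
  proof -
    have "(2 / \<eta>) powr (1 / w) \<le> Xp" using Xp by simp
    then have "((2 / \<eta>) powr (1 / w)) powr w \<le> Xp powr w" using w0 by (intro powr_mono2) auto
    then show ?thesis using w0 eta(1) by (simp add: powr_powr)
  qed
  then have "Xp powr (- w) \<le> \<eta> / 2" using eta(1) Xp1
    by (simp add: powr_minus_divide divide_le_eq field_simps)
  then have small: "\<bar>Pv x \<xi> k\<bar> < \<eta>" using Pb eta(1) by linarith
  then have "\<not> (\<forall>j\<le>k. \<bar>real_of_int (x j)\<bar> \<le> max H1 2)" using eta(2) P0 by force
  then obtain j where j: "j \<le> k" "max H1 2 < \<bar>real_of_int (x j)\<bar>" by force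
  define Hs where "Hs = (\<lambda>i. \<bar>real_of_int (x i)\<bar>) ` {..k}"
  have finH: "finite Hs" "Hs \<noteq> {}" unfolding Hs_def by auto
  define H where "H = Max Hs"
  have "H \<in> Hs" unfolding H_def using finH by (rule Max_in)
  then obtain i0 where i0: "i0 \<le> k" "H = \<bar>real_of_int (x i0)\<bar>" unfolding Hs_def by auto
  have aH: "\<forall>i\<le>k. \<bar>real_of_int (x i)\<bar> \<le> H" unfolding H_def Hs_def using finH(1) unfolding Hs_def by auto
  have Hj: "max H1 2 < H" using aH j by force
  have Hpos: "0 < H" using Hj by simp
  have HX: "H \<le> Xp" using i0 xb by simp
  have PH: "\<bar>Pv x \<xi> k\<bar> \<le> H powr (- w)"
  proof -
    have "Xp powr (- w) \<le> H powr (- w)" using Hpos HX w0 by (intro powr_mono2') auto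
    then show ?thesis using Pb by linarith
  qed
  have P2: "\<bar>Pv x \<xi> k\<bar> \<le> H / 2"
  proof -
    have "H powr (- w) \<le> 1" using Hj w0 by (simp add: powr_minus_divide ge_one_powr_ge_zero)
    then show ?thesis using PH Hj by linarith
  qed
  obtain F where F: "F \<subseteq> {..<n}" "card F = k - 1" "SOLV x \<xi> n k F C H"
    using solv_part2[OF k2 kn cases i0(1) i0(2) Hpos P2] unfolding C_def by blast
  have HH1: "H1 \<le> H" using Hj by simp
  show "\<exists>X\<ge>X0. \<exists>x::nat\<Rightarrow>int. 0 < \<bar>x 0\<bar> \<and> \<bar>real_of_int (x 0)\<bar> \<le> X \<and>
        (\<forall>m\<in>{1..n}. \<bar>real_of_int (x 0) * \<xi> ^ m - real_of_int (x m)\<bar> \<le> X powr (- lam))"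
    using H1 HH1 aH PH F by blast
qed

theorem part2:
  fixes k n :: nat and \<xi> :: real
  assumes "2 \<le> k" and "k \<le> n" and "\<not> algebraic \<xi>" and "k = 2 \<or> n = k + 1"
  shows "lambda_exp n \<xi> \<ge> bound_fun n k (w_exp k \<xi>)"
proof -
  have xi0: "\<xi> \<noteq> 0" using assms(3) by auto
  show ?thesis unfolding lambda_eq ws_eq
    by (rule sup_bound[OF assms(1,2) m1_in(2)[OF xi0] neg_in part2_mem[OF assms(1,2,4)]])
qed


theorem theorem3p1:
  fixes k n :: nat and \<xi> :: real
  assumes "2 \<le> k" and "k \<le> n" and "\<not> algebraic \<xi>"
  shows "lambda_exp n \<xi> \<ge> bound_fun n k (w_lead_exp k \<xi>) \<and>
         ((k = 2 \<or> n = k + 1) \<longrightarrow> lambda_exp n \<xi> \<ge> bound_fun n k (w_exp k \<xi>))"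
  using part1[OF assms] part2[OF assms] by blast

end
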